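(* Let $(G,E,\phi_c)$ be any twisted Exel–Pardo tuple. Then the canonical algebra homomorphism $L(E)\to L(G,E,\phi_c)$, sending $v\mapsto v$, $e\mapsto e$, $e^*\mapsto e^*$ for $v\in E^0$, $e\in E^1$, is injective.
   Context: $\ell$ is a commutative unital ring, $\mathcal U(\ell)$ its unit group. A twisted Exel–Pardo tuple $(G,E,\phi_c)$: a graph $E=(E^0,E^1,r,s)$, a group $G$ acting on $E$ by graph automorphisms, $\phi:G\times E^1\to G$ with $\phi(gh,e)=\phi(g,h(e))\phi(h,e)$ and $\phi(g,e)(v)=g(v)$ for $v\in E^0$, and $c:G\times E^1\to\mathcal U(\ell)$ with $c(gh,e)=c(g,h(e))c(h,e)$. A vertex $v$ is regular if $0<|s^{-1}(v)|<\infty$. $L(G,E,\phi_c)$ is the $\ell$-algebra generated by $e,e^*$ ($e\in E^1$), $vg$ ($v\in E^0,g\in G$), $v:=v1$, subject to $e=s(e)er(e)$, $e^*=r(e)e^*s(e)$, $e^*f=\delta_{e,f}r(e)$, $(vg)(wh)=\delta_{v,g(w)}v(gh)$, $(vg)e=\delta_{v,g(s(e))}c(g,e)g(e)(r(g(e))\phi(g,e))$, $e^*(vg)=\delta_{v,s(e)}c(g,g^{-1}(e))(r(e)\phi(g,g^{-1}(e)))(g^{-1}(e))^*$, and $v=\sum_{s(e)=v}ee^*$ for every regular $v$. $L(E)$ is the Leavitt path algebra of $E$ over $\ell$. *)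

theory Defs
  imports "HOL-Library.Poly_Mapping" "HOL-Algebra.Group"
begin

type_synonym ('x, 'l) falg = "'x list \<Rightarrow>\<^sub>0 'l"

definition fmul :: "('x, 'l::comm_ring_1) falg \<Rightarrow> ('x, 'l) falg \<Rightarrow> ('x, 'l) falg" where
  "fmul p q = (\<Sum>u\<in>Poly_Mapping.keys p. \<Sum>w\<in>Poly_Mapping.keys q. Poly_Mapping.single (u @ w) (Poly_Mapping.lookup p u * Poly_Mapping.lookup q w))"

definition fgen :: "'x \<Rightarrow> ('x, 'l::comm_ring_1) falg" where
  "fgen x = Poly_Mapping.single [x] 1"

definition fscal :: "'l::comm_ring_1 \<Rightarrow> ('x, 'l) falg \<Rightarrow> ('x, 'l) falg" where
  "fscal c p = fmul (Poly_Mapping.single [] c) p"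

definition fmap :: "('x \<Rightarrow> 'y) \<Rightarrow> ('x, 'l::comm_ring_1) falg \<Rightarrow> ('y, 'l) falg" where
  "fmap f p = (\<Sum>u\<in>Poly_Mapping.keys p. Poly_Mapping.single (map f u) (Poly_Mapping.lookup p u))"

inductive_set fideal :: "('x, 'l::comm_ring_1) falg set \<Rightarrow> ('x, 'l) falg set"
  for R :: "('x, 'l) falg set" where
  zero: "0 \<in> fideal R"
| base: "a \<in> R \<Longrightarrow> a \<in> fideal R"
| add: "a \<in> fideal R \<Longrightarrow> b \<in> fideal R \<Longrightarrow> a + b \<in> fideal R"
| mult: "a \<in> fideal R \<Longrightarrow> fmul (fmul x a) y \<in> fideal R"

text \<open>A graph is \<open>(V, E, r, s)\<close> with \<open>V = E\<^sup>0\<close>, \<open>E = E\<^sup>1\<close>.\<close>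
definition is_graph :: "'v set \<Rightarrow> 'e set \<Rightarrow> ('e \<Rightarrow> 'v) \<Rightarrow> ('e \<Rightarrow> 'v) \<Rightarrow> bool" where
  "is_graph V E r s \<longleftrightarrow> (\<forall>e\<in>E. r e \<in> V \<and> s e \<in> V)"

definition regular_vertex :: "'e set \<Rightarrow> ('e \<Rightarrow> 'v) \<Rightarrow> 'v \<Rightarrow> bool" where
  "regular_vertex E s v \<longleftrightarrow> finite {e\<in>E. s e = v} \<and> {e\<in>E. s e = v} \<noteq> {}"

datatype ('v, 'e) lgen = LV 'v | LE 'e | LS 'e   \<comment> \<open>vertex, edge, ghost edge \<open>e\<^sup>*\<close>\<close>

definition lgens :: "'v set \<Rightarrow> 'e set \<Rightarrow> ('v, 'e) lgen set" where
  "lgens V E = LV ` V \<union> LE ` E \<union> LS ` E"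

definition leavitt_rels ::
  "'v set \<Rightarrow> 'e set \<Rightarrow> ('e \<Rightarrow> 'v) \<Rightarrow> ('e \<Rightarrow> 'v) \<Rightarrow> (('v, 'e) lgen, 'l::comm_ring_1) falg set" where
  "leavitt_rels V E r s =
     {fmul (fgen (LV v)) (fgen (LV w)) - (if v = w then fgen (LV v) else 0) | v w. v \<in> V \<and> w \<in> V}
   \<union> {fmul (fgen (LV (s e))) (fgen (LE e)) - fgen (LE e) | e. e \<in> E}
   \<union> {fmul (fgen (LE e)) (fgen (LV (r e))) - fgen (LE e) | e. e \<in> E}
   \<union> {fmul (fgen (LV (r e))) (fgen (LS e)) - fgen (LS e) | e. e \<in> E}
   \<union> {fmul (fgen (LS e)) (fgen (LV (s e))) - fgen (LS e) | e. e \<in> E}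
   \<union> {fmul (fgen (LS e)) (fgen (LE f)) - (if e = f then fgen (LV (r e)) else 0) | e f. e \<in> E \<and> f \<in> E}
   \<union> {fgen (LV v) - (\<Sum>e\<in>{e\<in>E. s e = v}. fmul (fgen (LE e)) (fgen (LS e))) | v.
        v \<in> V \<and> regular_vertex E s v}"

definition twisted_EP_tuple ::
  "'g monoid \<Rightarrow> 'v set \<Rightarrow> 'e set \<Rightarrow> ('e \<Rightarrow> 'v) \<Rightarrow> ('e \<Rightarrow> 'v) \<Rightarrow>
   ('g \<Rightarrow> 'v \<Rightarrow> 'v) \<Rightarrow> ('g \<Rightarrow> 'e \<Rightarrow> 'e) \<Rightarrow> ('g \<Rightarrow> 'e \<Rightarrow> 'g) \<Rightarrow> ('g \<Rightarrow> 'e \<Rightarrow> 'l::comm_ring_1) \<Rightarrow> bool" where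
  "twisted_EP_tuple G V E r s av ae \<phi> c \<longleftrightarrow>
     group G \<and> is_graph V E r s \<and>
     \<comment> \<open>G acts on E by graph automorphisms\<close>
     (\<forall>g\<in>carrier G. bij_betw (av g) V V \<and> bij_betw (ae g) E E) \<and>
     (\<forall>v\<in>V. av \<one>\<^bsub>G\<^esub> v = v) \<and> (\<forall>e\<in>E. ae \<one>\<^bsub>G\<^esub> e = e) \<and>
     (\<forall>g\<in>carrier G. \<forall>h\<in>carrier G. \<forall>v\<in>V. av (g \<otimes>\<^bsub>G\<^esub> h) v = av g (av h v)) \<and>
     (\<forall>g\<in>carrier G. \<forall>h\<in>carrier G. \<forall>e\<in>E. ae (g \<otimes>\<^bsub>G\<^esub> h) e = ae g (ae h e)) \<and>
     (\<forall>g\<in>carrier G. \<forall>e\<in>E. s (ae g e) = av g (s e) \<and> r (ae g e) = av g (r e)) \<and>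
     \<comment> \<open>the cocycle phi\<close>
     (\<forall>g\<in>carrier G. \<forall>e\<in>E. \<phi> g e \<in> carrier G) \<and>
     (\<forall>g\<in>carrier G. \<forall>h\<in>carrier G. \<forall>e\<in>E.
        \<phi> (g \<otimes>\<^bsub>G\<^esub> h) e = \<phi> g (ae h e) \<otimes>\<^bsub>G\<^esub> \<phi> h e) \<and>
     (\<forall>g\<in>carrier G. \<forall>e\<in>E. \<forall>v\<in>V. av (\<phi> g e) v = av g v) \<and>
     \<comment> \<open>the unit-valued cocycle c\<close>
     (\<forall>g\<in>carrier G. \<forall>e\<in>E. c g e dvd 1) \<and>
     (\<forall>g\<in>carrier G. \<forall>h\<in>carrier G. \<forall>e\<in>E. c (g \<otimes>\<^bsub>G\<^esub> h) e = c g (ae h e) * c h e)"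

datatype ('v, 'e, 'g) ggen = GV 'v 'g | GE 'e | GS 'e   \<comment> \<open>\<open>vg\<close>, edge, ghost edge\<close>

definition ep_rels ::
  "'g monoid \<Rightarrow> 'v set \<Rightarrow> 'e set \<Rightarrow> ('e \<Rightarrow> 'v) \<Rightarrow> ('e \<Rightarrow> 'v) \<Rightarrow>
   ('g \<Rightarrow> 'v \<Rightarrow> 'v) \<Rightarrow> ('g \<Rightarrow> 'e \<Rightarrow> 'e) \<Rightarrow> ('g \<Rightarrow> 'e \<Rightarrow> 'g) \<Rightarrow> ('g \<Rightarrow> 'e \<Rightarrow> 'l::comm_ring_1) \<Rightarrow>
   (('v, 'e, 'g) ggen, 'l) falg set" where
  "ep_rels G V E r s av ae \<phi> c =
     {fgen (GE e) - fmul (fmul (fgen (GV (s e) \<one>\<^bsub>G\<^esub>)) (fgen (GE e))) (fgen (GV (r e) \<one>\<^bsub>G\<^esub>)) | e. e \<in> E}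
   \<union> {fgen (GS e) - fmul (fmul (fgen (GV (r e) \<one>\<^bsub>G\<^esub>)) (fgen (GS e))) (fgen (GV (s e) \<one>\<^bsub>G\<^esub>)) | e. e \<in> E}
   \<union> {fmul (fgen (GS e)) (fgen (GE f)) - (if e = f then fgen (GV (r e) \<one>\<^bsub>G\<^esub>) else 0) | e f. e \<in> E \<and> f \<in> E}
   \<union> {fmul (fgen (GV v g)) (fgen (GV w h)) - (if v = av g w then fgen (GV v (g \<otimes>\<^bsub>G\<^esub> h)) else 0) | v g w h.
        v \<in> V \<and> w \<in> V \<and> g \<in> carrier G \<and> h \<in> carrier G}
   \<union> {fmul (fgen (GV v g)) (fgen (GE e)) -
        (if v = av g (s e)
         then fscal (c g e) (fmul (fgen (GE (ae g e))) (fgen (GV (r (ae g e)) (\<phi> g e))))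
         else 0) | v g e. v \<in> V \<and> g \<in> carrier G \<and> e \<in> E}
   \<union> {fmul (fgen (GS e)) (fgen (GV v g)) -
        (if v = s e
         then fscal (c g (ae (inv\<^bsub>G\<^esub> g) e))
                (fmul (fgen (GV (r e) (\<phi> g (ae (inv\<^bsub>G\<^esub> g) e)))) (fgen (GS (ae (inv\<^bsub>G\<^esub> g) e))))
         else 0) | e v g. e \<in> E \<and> v \<in> V \<and> g \<in> carrier G}
   \<union> {fgen (GV v \<one>\<^bsub>G\<^esub>) - (\<Sum>e\<in>{e\<in>E. s e = v}. fmul (fgen (GE e)) (fgen (GS e))) | v.
        v \<in> V \<and> regular_vertex E s v}"

fun canon :: "'g monoid \<Rightarrow> ('v, 'e) lgen \<Rightarrow> ('v, 'e, 'g) ggen" where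
  "canon G (LV v) = GV v \<one>\<^bsub>G\<^esub>"
| "canon G (LE e) = GE e"
| "canon G (LS e) = GS e"

end

theory Submission
  imports Defs
begin


definition cmul :: "'l::comm_ring_1 \<Rightarrow> ('a \<Rightarrow>\<^sub>0 'l) \<Rightarrow> ('a \<Rightarrow>\<^sub>0 'l)" where
  "cmul a x = Poly_Mapping.map ((*) a) x"

lemma lookup_cmul [simp]: "Poly_Mapping.lookup (cmul a x) k = a * Poly_Mapping.lookup x k"
  by (simp add: cmul_def Poly_Mapping.map.rep_eq when_def)

lemma cmul_add: "cmul a (x + y) = cmul a x + cmul a y"
  by (rule poly_mapping_eqI) (simp add: lookup_add algebra_simps)
lemma cmul_add_left: "cmul (a + b) x = cmul a x + cmul b x"
  by (rule poly_mapping_eqI) (simp add: lookup_add algebra_simps)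
lemma cmul_cmul [simp]: "cmul a (cmul b x) = cmul (a * b) x"
  by (rule poly_mapping_eqI) (simp add: algebra_simps)
lemma cmul_0 [simp]: "cmul 0 x = 0"
  by (rule poly_mapping_eqI) simp
lemma cmul_1 [simp]: "cmul 1 x = x"
  by (rule poly_mapping_eqI) simp
lemma cmul_zero [simp]: "cmul a 0 = 0"
  by (rule poly_mapping_eqI) simp
lemma cmul_single [simp]: "cmul a (Poly_Mapping.single k b) = Poly_Mapping.single k (a * b)"
  by (rule poly_mapping_eqI) (simp add: lookup_single when_def)
lemma cmul_sum: "cmul a (sum f S) = (\<Sum>i\<in>S. cmul a (f i))"
  by (induction S rule: infinite_finite_induct) (auto simp: cmul_add)
lemma cmul_minus: "cmul a (- x) = - cmul a x"
  by (rule poly_mapping_eqI) (simp add: algebra_simps)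
lemma cmul_diff: "cmul a (x - y) = cmul a x - cmul a y"
  by (rule poly_mapping_eqI) (simp add: lookup_minus algebra_simps)
lemma cmul_neg1: "cmul (-1) x = - x"
  by (rule poly_mapping_eqI) simp
lemma keys_cmul: "Poly_Mapping.keys (cmul a x) \<subseteq> Poly_Mapping.keys x"
  by (auto simp: in_keys_iff)

definition ext :: "('a \<Rightarrow> 'b \<Rightarrow>\<^sub>0 'l::comm_ring_1) \<Rightarrow> ('a \<Rightarrow>\<^sub>0 'l) \<Rightarrow> ('b \<Rightarrow>\<^sub>0 'l)" where
  "ext b x = (\<Sum>i\<in>Poly_Mapping.keys x. cmul (Poly_Mapping.lookup x i) (b i))"

lemma ext_superset:
  assumes "finite A" "Poly_Mapping.keys x \<subseteq> A"
  shows "ext b x = (\<Sum>i\<in>A. cmul (Poly_Mapping.lookup x i) (b i))"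
  unfolding ext_def
  by (rule sum.mono_neutral_left) (use assms in \<open>auto simp: in_keys_iff\<close>)

lemma ext_add: "ext b (x + y) = ext b x + ext b y"
proof -
  let ?A = "Poly_Mapping.keys x \<union> Poly_Mapping.keys y"
  have "ext b (x + y) = (\<Sum>i\<in>?A. cmul (Poly_Mapping.lookup (x+y) i) (b i))"
    by (rule ext_superset) (auto dest: set_mp[OF keys_add])
  also have "\<dots> = (\<Sum>i\<in>?A. cmul (Poly_Mapping.lookup x i) (b i)) + (\<Sum>i\<in>?A. cmul (Poly_Mapping.lookup y i) (b i))"
    by (simp add: lookup_add cmul_add_left sum.distrib)
  also have "\<dots> = ext b x + ext b y"
    by (simp add: ext_superset[symmetric])
  finally show ?thesis .
qed

lemma ext_cmul: "ext b (cmul a x) = cmul a (ext b x)"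
proof -
  have "ext b (cmul a x) = (\<Sum>i\<in>Poly_Mapping.keys x. cmul (Poly_Mapping.lookup (cmul a x) i) (b i))"
    by (rule ext_superset) (auto simp: keys_cmul)
  then show ?thesis by (simp add: ext_def cmul_sum)
qed

lemma ext_single [simp]: "ext b (Poly_Mapping.single i a) = cmul a (b i)"
  by (cases "a = 0") (simp_all add: ext_def)

lemma ext_zero [simp]: "ext b 0 = 0"
  by (simp add: ext_def)

lemma ext_basis_add: "ext (\<lambda>i. b1 i + b2 i) x = ext b1 x + ext b2 x"
  by (simp add: ext_def cmul_add sum.distrib)
lemma ext_basis_cmul: "ext (\<lambda>i. cmul a (b i)) x = cmul a (ext b x)"
  by (simp add: ext_def cmul_sum mult.commute)
lemma ext_basis_zero [simp]: "ext (\<lambda>i. 0) x = 0"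
  by (simp add: ext_def)
lemma ext_basis_diff: "ext (\<lambda>i. b1 i - b2 i) x = ext b1 x - ext b2 x"
  by (simp add: ext_def cmul_diff sum_subtractf)
lemma ext_basis_sum: "ext (\<lambda>i. \<Sum>j\<in>S. b j i) x = (\<Sum>j\<in>S. ext (b j) x)"
  by (simp add: ext_def cmul_sum sum.swap[of _ S])
lemma ext_id: "ext (\<lambda>i. Poly_Mapping.single i 1) x = x"
proof (rule poly_mapping_eqI)
  fix k
  have "Poly_Mapping.lookup (ext (\<lambda>i. Poly_Mapping.single i 1) x) k =
     (\<Sum>i\<in>Poly_Mapping.keys x. if i = k then Poly_Mapping.lookup x i else 0)"
    by (simp add: ext_def lookup_sum lookup_single when_def)
  also have "\<dots> = Poly_Mapping.lookup x k"
    by (cases "k \<in> Poly_Mapping.keys x") (auto simp: in_keys_iff)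
  finally show "Poly_Mapping.lookup (ext (\<lambda>i. Poly_Mapping.single i 1) x) k = Poly_Mapping.lookup x k" .
qed

lemma keys_ext: "Poly_Mapping.keys (ext b x) \<subseteq> (\<Union>i\<in>Poly_Mapping.keys x. Poly_Mapping.keys (b i))"
  unfolding ext_def using keys_sum keys_cmul by fastforce

definition lin :: "(('a \<Rightarrow>\<^sub>0 'l::comm_ring_1) \<Rightarrow> ('b \<Rightarrow>\<^sub>0 'l)) \<Rightarrow> bool" where
  "lin f \<longleftrightarrow> (\<forall>x y. f (x + y) = f x + f y) \<and> (\<forall>a x. f (cmul a x) = cmul a (f x))"

lemma lin_ext: "lin (ext b)"
  by (simp add: lin_def ext_add ext_cmul)

lemma lin_add: "lin f \<Longrightarrow> f (x + y) = f x + f y" by (simp add: lin_def)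
lemma lin_cmul: "lin f \<Longrightarrow> f (cmul a x) = cmul a (f x)" by (simp add: lin_def)
lemma lin_zero: "lin f \<Longrightarrow> f 0 = 0"
  using lin_cmul[of f 0 0] by simp
lemma lin_minus: "lin f \<Longrightarrow> f (- x) = - f x"
  using lin_cmul[of f "-1" x] by (simp add: cmul_neg1)
lemma lin_diff: "lin f \<Longrightarrow> f (x - y) = f x - f y"
  using lin_add[of f x "- y"] lin_minus[of f y] by simp
lemma lin_sum: "lin f \<Longrightarrow> f (sum g S) = (\<Sum>i\<in>S. f (g i))"
  by (induction S rule: infinite_finite_induct) (auto simp: lin_zero lin_add)
lemma lin_ext_comp: "lin f \<Longrightarrow> f (ext b x) = ext (\<lambda>i. f (b i)) x"
  by (simp add: ext_def lin_sum lin_cmul)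
lemma lin_comp: "lin f \<Longrightarrow> lin g \<Longrightarrow> lin (\<lambda>x. f (g x))"
  by (simp add: lin_def)
lemma lin_id: "lin (\<lambda>x. x)" by (simp add: lin_def)
lemma lin_plus: "lin f \<Longrightarrow> lin g \<Longrightarrow> lin (\<lambda>x. f x + g x)"
  by (simp add: lin_def cmul_add algebra_simps)
lemma lin_diff_fun: "lin f \<Longrightarrow> lin g \<Longrightarrow> lin (\<lambda>x. f x - g x)"
  by (simp add: lin_def cmul_diff algebra_simps)

lemma fmul_ext: "fmul p q = ext (\<lambda>u. ext (\<lambda>w. Poly_Mapping.single (u @ w) 1) q) p"
  by (simp add: fmul_def ext_def cmul_sum mult.commute)

lemma fmul_single_single [simp]:
  "fmul (Poly_Mapping.single u a) (Poly_Mapping.single w b) = Poly_Mapping.single (u @ w) (a * b)"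
  by (simp add: fmul_ext mult.commute)

lemma lin_fmul_left: "lin (\<lambda>p. fmul p q)"
  unfolding fmul_ext by (rule lin_ext)

lemma lin_fmul_right: "lin (\<lambda>q. fmul p q)"
  unfolding fmul_ext lin_def
  by (simp add: ext_add ext_cmul ext_basis_add ext_basis_cmul)

lemma fmul_one_right [simp]: "fmul p (Poly_Mapping.single [] 1) = p"
  by (simp add: fmul_ext ext_id)

lemma fmul_scal_left: "fmul (Poly_Mapping.single [] a) p = cmul a p"
  by (simp add: fmul_ext ext_id)

lemma fscal_eq: "fscal a p = cmul a p"
  by (simp add: fscal_def fmul_scal_left)

lemma fmap_ext: "fmap f p = ext (\<lambda>u. Poly_Mapping.single (map f u) 1) p"
  by (simp add: fmap_def ext_def)

lemma fgen_mul_single: "fmul (fgen x) (Poly_Mapping.single u a) = Poly_Mapping.single (x # u) a"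
  by (simp add: fgen_def)

lemma fideal_mult2: "a \<in> fideal R \<Longrightarrow> fmul (fmul x a) y \<in> fideal R"
  by (rule fideal.mult)

lemma fideal_cmul: "a \<in> fideal R \<Longrightarrow> cmul k a \<in> fideal R"
  using fideal.mult[of a R "Poly_Mapping.single [] k" "Poly_Mapping.single [] 1"]
  by (simp add: fmul_scal_left)

lemma fideal_uminus: "a \<in> fideal R \<Longrightarrow> - a \<in> fideal R"
  using fideal_cmul[of a R "-1"] by (simp add: cmul_neg1)

lemma fideal_diff: "a \<in> fideal R \<Longrightarrow> b \<in> fideal R \<Longrightarrow> a - b \<in> fideal R"
  using fideal.add[of a R "- b"] fideal_uminus[of b R] by simp

lemma fideal_sum: "(\<And>i. i \<in> S \<Longrightarrow> f i \<in> fideal R) \<Longrightarrow> sum f S \<in> fideal R"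
  by (induction S rule: infinite_finite_induct) (auto intro: fideal.zero fideal.add)

lemma fideal_sandwich: "a \<in> R \<Longrightarrow> fmul (fmul x a) y \<in> fideal R"
  by (rule fideal.mult[OF fideal.base])


locale ep = group G for G :: "'g monoid" (structure) +
  fixes V :: "'v set" and E :: "'e set" and r s :: "'e \<Rightarrow> 'v"
    and av :: "'g \<Rightarrow> 'v \<Rightarrow> 'v" and ae :: "'g \<Rightarrow> 'e \<Rightarrow> 'e" and \<phi> :: "'g \<Rightarrow> 'e \<Rightarrow> 'g"
    and c :: "'g \<Rightarrow> 'e \<Rightarrow> 'l::comm_ring_1"
  assumes tup: "twisted_EP_tuple G V E r s av ae \<phi> c"
begin

lemma rV [simp]: "e \<in> E \<Longrightarrow> r e \<in> V" using tup by (auto simp: twisted_EP_tuple_def is_graph_def)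
lemma sV [simp]: "e \<in> E \<Longrightarrow> s e \<in> V" using tup by (auto simp: twisted_EP_tuple_def is_graph_def)
lemma av_closed [simp]: "g \<in> carrier G \<Longrightarrow> v \<in> V \<Longrightarrow> av g v \<in> V"
  using tup by (auto simp: twisted_EP_tuple_def intro: bij_betw_apply)
lemma ae_closed [simp]: "g \<in> carrier G \<Longrightarrow> e \<in> E \<Longrightarrow> ae g e \<in> E"
  using tup by (auto simp: twisted_EP_tuple_def intro: bij_betw_apply)
lemma av_inj: "g \<in> carrier G \<Longrightarrow> x \<in> V \<Longrightarrow> y \<in> V \<Longrightarrow> av g x = av g y \<longleftrightarrow> x = y"
  using tup unfolding twisted_EP_tuple_def by (meson bij_betw_imp_inj_on inj_onD)
lemma av_one [simp]: "v \<in> V \<Longrightarrow> av \<one> v = v" using tup by (simp add: twisted_EP_tuple_def)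
lemma ae_one [simp]: "e \<in> E \<Longrightarrow> ae \<one> e = e" using tup by (simp add: twisted_EP_tuple_def)
lemma av_mult: "g \<in> carrier G \<Longrightarrow> h \<in> carrier G \<Longrightarrow> v \<in> V \<Longrightarrow> av (g \<otimes> h) v = av g (av h v)"
  using tup by (simp add: twisted_EP_tuple_def)
lemma ae_mult: "g \<in> carrier G \<Longrightarrow> h \<in> carrier G \<Longrightarrow> e \<in> E \<Longrightarrow> ae (g \<otimes> h) e = ae g (ae h e)"
  using tup by (simp add: twisted_EP_tuple_def)
lemma s_ae [simp]: "g \<in> carrier G \<Longrightarrow> e \<in> E \<Longrightarrow> s (ae g e) = av g (s e)"
  using tup by (simp add: twisted_EP_tuple_def)
lemma r_ae [simp]: "g \<in> carrier G \<Longrightarrow> e \<in> E \<Longrightarrow> r (ae g e) = av g (r e)"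
  using tup by (simp add: twisted_EP_tuple_def)
lemma phi_closed [simp]: "g \<in> carrier G \<Longrightarrow> e \<in> E \<Longrightarrow> \<phi> g e \<in> carrier G"
  using tup by (simp add: twisted_EP_tuple_def)
lemma phi_mult: "g \<in> carrier G \<Longrightarrow> h \<in> carrier G \<Longrightarrow> e \<in> E \<Longrightarrow> \<phi> (g \<otimes> h) e = \<phi> g (ae h e) \<otimes> \<phi> h e"
  using tup by (simp add: twisted_EP_tuple_def)
lemma av_phi [simp]: "g \<in> carrier G \<Longrightarrow> e \<in> E \<Longrightarrow> v \<in> V \<Longrightarrow> av (\<phi> g e) v = av g v"
  using tup by (simp add: twisted_EP_tuple_def)
lemma c_unit: "g \<in> carrier G \<Longrightarrow> e \<in> E \<Longrightarrow> c g e dvd 1"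
  using tup by (simp add: twisted_EP_tuple_def)
lemma c_mult: "g \<in> carrier G \<Longrightarrow> h \<in> carrier G \<Longrightarrow> e \<in> E \<Longrightarrow> c (g \<otimes> h) e = c g (ae h e) * c h e"
  using tup by (simp add: twisted_EP_tuple_def)

lemma ae_inv1 [simp]: "g \<in> carrier G \<Longrightarrow> e \<in> E \<Longrightarrow> ae (inv g) (ae g e) = e"
  by (metis ae_mult ae_one inv_closed l_inv)
lemma ae_inv2 [simp]: "g \<in> carrier G \<Longrightarrow> e \<in> E \<Longrightarrow> ae g (ae (inv g) e) = e"
  by (metis ae_mult ae_one inv_closed r_inv)

lemma phi_one [simp]: "e \<in> E \<Longrightarrow> \<phi> \<one> e = \<one>"
proof -
  assume e: "e \<in> E"
  have "\<phi> \<one> e \<otimes> \<phi> \<one> e = \<phi> \<one> e \<otimes> \<one>"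
    using phi_mult[of \<one> \<one> e] e by simp
  then show ?thesis using e by (simp del: r_one)
qed

lemma c_one [simp]: "e \<in> E \<Longrightarrow> c \<one> e = 1"
proof -
  assume e: "e \<in> E"
  have cc: "c \<one> e = c \<one> e * c \<one> e" using c_mult[of \<one> \<one> e] e by simp
  obtain k where k: "1 = c \<one> e * k" using c_unit[of \<one> e] e by (auto elim: dvdE)
  have "c \<one> e * k = c \<one> e * c \<one> e * k" using cc by simp
  then show ?thesis using k by (metis mult.assoc mult.commute mult_1_right)
qed

fun gpath :: "'g \<Rightarrow> 'e list \<Rightarrow> 'e list" where
  "gpath h [] = []"
| "gpath h (e # al) = ae h e # gpath (\<phi> h e) al"

fun gphi :: "'g \<Rightarrow> 'e list \<Rightarrow> 'g" where
  "gphi h [] = h"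
| "gphi h (e # al) = gphi (\<phi> h e) al"

fun gc :: "'g \<Rightarrow> 'e list \<Rightarrow> 'l" where
  "gc h [] = 1"
| "gc h (e # al) = c h e * gc (\<phi> h e) al"

fun src :: "'e list \<Rightarrow> 'v \<Rightarrow> 'v" where
  "src [] u = u"
| "src (e # al) u = s e"

fun pathok :: "'e list \<Rightarrow> 'v \<Rightarrow> bool" where
  "pathok [] u = True"
| "pathok (e # al) u = (r e = src al u \<and> pathok al u)"

lemma gpath_E: "set al \<subseteq> E \<Longrightarrow> h \<in> carrier G \<Longrightarrow> set (gpath h al) \<subseteq> E"
  by (induction al arbitrary: h) auto

lemma gphi_closed [simp]: "set al \<subseteq> E \<Longrightarrow> h \<in> carrier G \<Longrightarrow> gphi h al \<in> carrier G"
  by (induction al arbitrary: h) auto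

lemma av_gphi [simp]: "set al \<subseteq> E \<Longrightarrow> h \<in> carrier G \<Longrightarrow> v \<in> V \<Longrightarrow> av (gphi h al) v = av h v"
  by (induction al arbitrary: h) auto

lemma length_gpath [simp]: "length (gpath h al) = length al"
  by (induction al arbitrary: h) auto

lemma gpath_one [simp]: "set al \<subseteq> E \<Longrightarrow> gpath \<one> al = al"
  by (induction al) auto
lemma gphi_one [simp]: "set al \<subseteq> E \<Longrightarrow> gphi \<one> al = \<one>"
  by (induction al) auto
lemma gc_one [simp]: "set al \<subseteq> E \<Longrightarrow> gc \<one> al = 1"
  by (induction al) auto

lemma gpath_snoc: "gpath h (al @ [e]) = gpath h al @ [ae (gphi h al) e]"
  by (induction al arbitrary: h) auto
lemma gphi_snoc: "gphi h (al @ [e]) = \<phi> (gphi h al) e"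
  by (induction al arbitrary: h) auto
lemma gc_snoc: "gc h (al @ [e]) = gc h al * c (gphi h al) e"
  by (induction al arbitrary: h) (auto simp: mult.assoc)

lemma gpath_mult: "set al \<subseteq> E \<Longrightarrow> g \<in> carrier G \<Longrightarrow> h \<in> carrier G \<Longrightarrow>
    gpath (g \<otimes> h) al = gpath g (gpath h al)"
  by (induction al arbitrary: g h) (auto simp: ae_mult phi_mult)
lemma gphi_mult: "set al \<subseteq> E \<Longrightarrow> g \<in> carrier G \<Longrightarrow> h \<in> carrier G \<Longrightarrow>
    gphi (g \<otimes> h) al = gphi g (gpath h al) \<otimes> gphi h al"
  by (induction al arbitrary: g h) (auto simp: phi_mult)
lemma gc_mult: "set al \<subseteq> E \<Longrightarrow> g \<in> carrier G \<Longrightarrow> h \<in> carrier G \<Longrightarrow>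
    gc (g \<otimes> h) al = gc g (gpath h al) * gc h al"
  by (induction al arbitrary: g h) (auto simp: phi_mult c_mult algebra_simps)

lemma src_V [simp]: "set al \<subseteq> E \<Longrightarrow> u \<in> V \<Longrightarrow> src al u \<in> V"
  by (cases al) auto

lemma src_gpath: "set al \<subseteq> E \<Longrightarrow> h \<in> carrier G \<Longrightarrow> u \<in> V \<Longrightarrow>
    src (gpath h al) (av h u) = av h (src al u)"
  by (cases al) auto

lemma pathok_gpath: "set al \<subseteq> E \<Longrightarrow> h \<in> carrier G \<Longrightarrow> u \<in> V \<Longrightarrow> pathok al u \<Longrightarrow>
    pathok (gpath h al) (av h u)"
proof (induction al arbitrary: h)
  case Nil then show ?case by simp
next
  case (Cons e al)
  then have e: "e \<in> E" and al: "set al \<subseteq> E" and ph: "\<phi> h e \<in> carrier G" by auto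
  have "pathok (gpath (\<phi> h e) al) (av (\<phi> h e) u)" using Cons.IH[OF al ph] Cons.prems by simp
  then have 1: "pathok (gpath (\<phi> h e) al) (av h u)" using Cons.prems e by simp
  have 3: "src (gpath (\<phi> h e) al) (av (\<phi> h e) u) = av (\<phi> h e) (src al u)"
    using al ph Cons.prems by (intro src_gpath) auto
  have "r (ae h e) = src (gpath (\<phi> h e) al) (av (\<phi> h e) u)"
    unfolding 3 using Cons e al ph by simp
  then have 2: "r (ae h e) = src (gpath (\<phi> h e) al) (av h u)" using Cons.prems e by simp
  show ?case using 1 2 Cons e by simp
qed

lemma src_snoc: "src (al @ [e]) u = src al (s e)"
  by (cases al) auto

lemma pathok_snoc: "pathok (al @ [e]) v \<longleftrightarrow> pathok al (s e) \<and> r e = v"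
  by (induction al) (auto simp: src_snoc)

end


datatype ('v, 'e, 'g) tr = Star | Tr "'e list" 'v 'g "'e list"

context ep begin

fun valid :: "('v, 'e, 'g) tr \<Rightarrow> bool" where
  "valid Star = True"
| "valid (Tr al u g be) = (set al \<subseteq> E \<and> set be \<subseteq> E \<and> u \<in> V \<and> g \<in> carrier G \<and> pathok al u)"

fun stepT :: "('v, 'e, 'g) ggen \<Rightarrow> ('v, 'e, 'g) tr \<Rightarrow> ('v, 'e, 'g) tr \<times> 'l" where
  "stepT (GV v h) Star = (if v \<in> V \<and> h \<in> carrier G then (Tr [] v h [], 1) else (Star, 0))"
| "stepT (GV v h) (Tr al u g be) =
    (if v \<in> V \<and> h \<in> carrier G \<and> v = av h (src al u)
     then (Tr (gpath h al) (av h u) (gphi h al \<otimes> g) be, gc h al) else (Star, 0))"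
| "stepT (GE e) Star = (if e \<in> E then (Tr [e] (r e) \<one> [], 1) else (Star, 0))"
| "stepT (GE e) (Tr al u g be) = (if e \<in> E \<and> r e = src al u then (Tr (e # al) u g be, 1) else (Star, 0))"
| "stepT (GS e) Star = (if e \<in> E then (Tr [] (r e) \<one> [e], 1) else (Star, 0))"
| "stepT (GS e) (Tr [] u g be) =
    (if e \<in> E \<and> u = s e
     then (Tr [] (r e) (\<phi> g (ae (inv g) e)) (ae (inv g) e # be), c g (ae (inv g) e)) else (Star, 0))"
| "stepT (GS e) (Tr (a # al) u g be) = (if e \<in> E \<and> e = a then (Tr al u g be, 1) else (Star, 0))"

definition act :: "('v, 'e, 'g) ggen \<Rightarrow> (('v, 'e, 'g) tr \<Rightarrow>\<^sub>0 'l) \<Rightarrow> (('v, 'e, 'g) tr \<Rightarrow>\<^sub>0 'l)" where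
  "act x n = ext (\<lambda>t. Poly_Mapping.single (fst (stepT x t)) (snd (stepT x t))) n"

lemma act_single [simp]:
  "act x (Poly_Mapping.single t a) = Poly_Mapping.single (fst (stepT x t)) (a * snd (stepT x t))"
  by (simp add: act_def)

lemma lin_act: "lin (act x)"
  unfolding act_def[abs_def] by (rule lin_ext)

fun actw :: "('v, 'e, 'g) ggen list \<Rightarrow> (('v, 'e, 'g) tr \<Rightarrow>\<^sub>0 'l) \<Rightarrow> (('v, 'e, 'g) tr \<Rightarrow>\<^sub>0 'l)" where
  "actw [] n = n"
| "actw (x # u) n = act x (actw u n)"

lemma lin_actw: "lin (actw u)"
proof (induction u)
  case Nil then show ?case by (simp add: lin_def)
next
  case (Cons x u)
  have "lin (\<lambda>n. act x (actw u n))" by (rule lin_comp[OF lin_act Cons])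
  then show ?case by (simp add: lin_def)
qed

lemma actw_append: "actw (u @ w) n = actw u (actw w n)"
  by (induction u) auto

definition rho :: "(('v, 'e, 'g) ggen, 'l) falg \<Rightarrow> (('v, 'e, 'g) tr \<Rightarrow>\<^sub>0 'l) \<Rightarrow> (('v, 'e, 'g) tr \<Rightarrow>\<^sub>0 'l)" where
  "rho p n = ext (\<lambda>u. actw u n) p"

lemma lin_rho_p: "lin (\<lambda>p. rho p n)"
  unfolding rho_def by (rule lin_ext)

lemma lin_rho: "lin (rho p)"
  unfolding rho_def lin_def
  by (simp add: lin_add[OF lin_actw] lin_cmul[OF lin_actw] ext_basis_add ext_basis_cmul)

lemma rho_fmul: "rho (fmul p q) n = rho p (rho q n)"
proof -
  have "rho (fmul p q) n = ext (\<lambda>u. ext (\<lambda>u'. actw u' n) (ext (\<lambda>w. Poly_Mapping.single (u @ w) 1) q)) p"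
    unfolding rho_def fmul_ext by (rule lin_ext_comp[OF lin_ext])
  also have "\<dots> = ext (\<lambda>u. ext (\<lambda>w. actw (u @ w) n) q) p"
    by (simp add: lin_ext_comp[OF lin_ext])
  also have "\<dots> = ext (\<lambda>u. actw u (ext (\<lambda>w. actw w n) q)) p"
    by (simp add: lin_ext_comp[OF lin_actw] actw_append)
  finally show ?thesis by (simp add: rho_def)
qed

lemma rho_fgen [simp]: "rho (fgen x) n = act x n"
  by (simp add: rho_def fgen_def)

lemma rho_diff: "rho (p - q) n = rho p n - rho q n"
  using lin_diff[OF lin_rho_p] by blast
lemma rho_add: "rho (p + q) n = rho p n + rho q n"
  using lin_add[OF lin_rho_p] by blast
lemma rho_zero [simp]: "rho 0 n = 0"
  using lin_zero[OF lin_rho_p] by blast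
lemma rho_cmul: "rho (cmul a p) n = cmul a (rho p n)"
  using lin_cmul[OF lin_rho_p] by blast
lemma rho_sum: "rho (sum f S) n = (\<Sum>i\<in>S. rho (f i) n)"
  using lin_sum[OF lin_rho_p] by blast
lemma rho_fscal: "rho (fscal a p) n = cmul a (rho p n)"
  by (simp add: fscal_eq rho_cmul)

definition reach :: "(('v, 'e, 'g) tr \<Rightarrow>\<^sub>0 'l) \<Rightarrow> bool" where
  "reach n \<longleftrightarrow> (\<forall>t\<in>Poly_Mapping.keys n. valid t)"

lemma stepT_valid:
  assumes "valid t" "snd (stepT x t) \<noteq> 0"
  shows "valid (fst (stepT x t))"
proof (cases x)
  case (GV v h)
  show ?thesis
  proof (cases t)
    case (Tr al u g be)
    then have "v \<in> V \<and> h \<in> carrier G \<and> v = av h (src al u)"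
      using assms GV by (auto split: if_splits)
    then show ?thesis using assms GV Tr by (simp add: gpath_E pathok_gpath)
  qed (use assms GV in simp)
next
  case (GE e)
  show ?thesis
  proof (cases t)
    case (Tr al u g be)
    then have "e \<in> E \<and> r e = src al u"
      using assms GE by (auto split: if_splits)
    then show ?thesis using assms GE Tr by simp
  qed (use assms GE in simp)
next
  case (GS e)
  show ?thesis
  proof (cases t)
    case (Tr al u g be)
    show ?thesis
    proof (cases al)
      case Nil
      then have "e \<in> E \<and> u = s e"
        using assms GS Tr by (auto split: if_splits)
      then show ?thesis using assms GS Tr Nil by simp
    next
      case (Cons a al')
      then have "e \<in> E \<and> e = a"
        using assms GS Tr by (auto split: if_splits)
      then show ?thesis using assms GS Tr Cons by simp
    qed
  qed (use assms GS in simp)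
qed

lemma reach_act: "reach n \<Longrightarrow> reach (act x n)"
  unfolding reach_def
proof
  fix t' assume R: "\<forall>t\<in>Poly_Mapping.keys n. valid t" and t': "t' \<in> Poly_Mapping.keys (act x n)"
  have "t' \<in> (\<Union>t\<in>Poly_Mapping.keys n. Poly_Mapping.keys (Poly_Mapping.single (fst (stepT x t)) (snd (stepT x t))))"
    using subsetD[OF keys_ext t'[unfolded act_def]] .
  then obtain t where t: "t \<in> Poly_Mapping.keys n"
    and t'2: "t' \<in> Poly_Mapping.keys (Poly_Mapping.single (fst (stepT x t)) (snd (stepT x t)))"
    by blast
  then have "t' = fst (stepT x t)" "snd (stepT x t) \<noteq> 0"
    by (cases "snd (stepT x t) = 0"; simp)+
  moreover have "valid t" using R t by (rule bspec)
  ultimately show "valid t'" using stepT_valid[of t x] by simp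
qed

lemma reach_actw: "reach n \<Longrightarrow> reach (actw u n)"
  by (induction u) (auto simp: reach_act)

lemma reach_rho: "reach n \<Longrightarrow> reach (rho p n)"
  unfolding reach_def
proof
  fix t assume R: "\<forall>t\<in>Poly_Mapping.keys n. valid t" and t: "t \<in> Poly_Mapping.keys (rho p n)"
  have "t \<in> (\<Union>u\<in>Poly_Mapping.keys p. Poly_Mapping.keys (actw u n))"
    using subsetD[OF keys_ext t[unfolded rho_def]] .
  then obtain u where "t \<in> Poly_Mapping.keys (actw u n)" by blast
  moreover have "reach (actw u n)" using R unfolding reach_def[symmetric] by (rule reach_actw)
  ultimately show "valid t" unfolding reach_def by (rule bspec[rotated])
qed

lemma reach_single: "valid t \<Longrightarrow> reach (Poly_Mapping.single t a)"
  by (simp add: reach_def)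

lemma sum_closed:
  assumes "0 \<in> W" "\<And>x y. x \<in> W \<Longrightarrow> y \<in> W \<Longrightarrow> x + y \<in> W" "\<And>i. i \<in> S \<Longrightarrow> f i \<in> W"
  shows "sum f S \<in> W"
  using assms(3)
proof (induction S rule: infinite_finite_induct)
  case (insert x F)
  then show ?case by (simp add: assms(2))
qed (simp_all add: assms(1))

lemma lin_basis_closed:
  assumes "lin f" "0 \<in> W" "\<And>x y. x \<in> W \<Longrightarrow> y \<in> W \<Longrightarrow> x + y \<in> W"
    "\<And>a x. x \<in> W \<Longrightarrow> cmul a x \<in> W"
    "\<And>t. t \<in> Poly_Mapping.keys n \<Longrightarrow> f (Poly_Mapping.single t 1) \<in> W"
  shows "f n \<in> W"
proof -
  have "f n = f (ext (\<lambda>t. Poly_Mapping.single t 1) n)" by (simp add: ext_id)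
  also have "\<dots> = ext (\<lambda>t. f (Poly_Mapping.single t 1)) n"
    by (rule lin_ext_comp[OF assms(1)])
  also have "\<dots> = (\<Sum>t\<in>Poly_Mapping.keys n. cmul (Poly_Mapping.lookup n t) (f (Poly_Mapping.single t 1)))"
    by (simp only: ext_def)
  also have "\<dots> \<in> W"
  proof (rule sum_closed)
    show "0 \<in> W" by (rule assms(2))
    show "x + y \<in> W" if "x \<in> W" "y \<in> W" for x y by (rule assms(3)[OF that])
    show "cmul (Poly_Mapping.lookup n t) (f (Poly_Mapping.single t 1)) \<in> W"
      if "t \<in> Poly_Mapping.keys n" for t by (rule assms(4)[OF assms(5)[OF that]])
  qed
  finally show ?thesis .
qed

lemma lin_zero_on_reach:
  assumes "lin f" "\<And>t. valid t \<Longrightarrow> f (Poly_Mapping.single t 1) = 0" "reach n"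
  shows "f n = 0"
proof -
  have "f n \<in> {0}"
  proof (rule lin_basis_closed[OF assms(1)])
    show "f (Poly_Mapping.single t 1) \<in> {0}" if "t \<in> Poly_Mapping.keys n" for t
      using assms(2) assms(3) that unfolding reach_def by blast
  qed auto
  then show ?thesis by simp
qed

end


lemma single_eq_iff: "Poly_Mapping.single a k = Poly_Mapping.single b l \<longleftrightarrow> (k = l \<and> (k = 0 \<or> a = b))"
  by (metis lookup_single_eq lookup_single_not_eq single_zero)

context ep begin

lemma act_zero [simp]: "act x 0 = 0"
  by (rule lin_zero[OF lin_act])

lemma av_inv1 [simp]: "g \<in> carrier G \<Longrightarrow> v \<in> V \<Longrightarrow> av (inv g) (av g v) = v"
  by (metis av_mult av_one inv_closed l_inv)
lemma av_inv2 [simp]: "g \<in> carrier G \<Longrightarrow> v \<in> V \<Longrightarrow> av g (av (inv g) v) = v"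
  by (metis av_mult av_one inv_closed r_inv)

lemma R1:
  assumes e: "e \<in> E" and vt: "valid t"
  shows "rho (fgen (GE e) - fmul (fmul (fgen (GV (s e) \<one>)) (fgen (GE e))) (fgen (GV (r e) \<one>)))
           (Poly_Mapping.single t 1) = 0"
proof (cases t)
  case Star
  then show ?thesis using e by (simp add: rho_diff rho_fmul)
next
  case (Tr al u g be)
  then show ?thesis using e vt by (simp add: rho_diff rho_fmul single_eq_iff)
qed

lemma R2:
  assumes e: "e \<in> E" and vt: "valid t"
  shows "rho (fgen (GS e) - fmul (fmul (fgen (GV (r e) \<one>)) (fgen (GS e))) (fgen (GV (s e) \<one>)))
           (Poly_Mapping.single t 1) = 0"
proof (cases t)
  case Star
  then show ?thesis using e by (simp add: rho_diff rho_fmul)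
next
  case (Tr al u g be)
  then show ?thesis using e vt by (cases al) (auto simp add: rho_diff rho_fmul single_eq_iff)
qed

lemma R3:
  assumes e: "e \<in> E" and f: "f \<in> E" and vt: "valid t"
  shows "rho (fmul (fgen (GS e)) (fgen (GE f)) - (if e = f then fgen (GV (r e) \<one>) else 0))
           (Poly_Mapping.single t 1) = 0"
proof (cases t)
  case Star
  then show ?thesis using e f by (simp add: rho_diff rho_fmul)
next
  case (Tr al u g be)
  then show ?thesis using e f vt by (cases al) (auto simp add: rho_diff rho_fmul single_eq_iff)
qed


lemma R4:
  assumes v: "v \<in> V" and w: "w \<in> V" and g: "g \<in> carrier G" and h: "h \<in> carrier G" and vt: "valid t"
  shows "rho (fmul (fgen (GV v g)) (fgen (GV w h)) - (if v = av g w then fgen (GV v (g \<otimes> h)) else 0))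
           (Poly_Mapping.single t 1) = 0"
proof (cases t)
  case Star
  then show ?thesis using assms by (simp add: rho_diff rho_fmul)
next
  case (Tr al u k be)
  then show ?thesis using assms
    by (cases al) (auto simp add: rho_diff rho_fmul single_eq_iff gpath_mult gphi_mult gc_mult av_mult
        m_assoc gpath_E mult.commute av_inj ae_mult phi_mult c_mult)
qed

lemma R5:
  assumes v: "v \<in> V" and g: "g \<in> carrier G" and e: "e \<in> E" and vt: "valid t"
  shows "rho (fmul (fgen (GV v g)) (fgen (GE e)) -
        (if v = av g (s e)
         then fscal (c g e) (fmul (fgen (GE (ae g e))) (fgen (GV (r (ae g e)) (\<phi> g e))))
         else 0)) (Poly_Mapping.single t 1) = 0"
proof (cases t)
  case Star
  then show ?thesis using assms by (simp add: rho_diff rho_fmul rho_fscal)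
next
  case (Tr al u k be)
  then show ?thesis using assms
    by (cases al) (auto simp add: rho_diff rho_fmul rho_fscal single_eq_iff av_inj gpath_E)
qed

lemma R6:
  assumes e: "e \<in> E" and v: "v \<in> V" and g: "g \<in> carrier G" and vt: "valid t"
  shows "rho (fmul (fgen (GS e)) (fgen (GV v g)) -
        (if v = s e
         then fscal (c g (ae (inv g) e))
                (fmul (fgen (GV (r e) (\<phi> g (ae (inv g) e)))) (fgen (GS (ae (inv g) e))))
         else 0)) (Poly_Mapping.single t 1) = 0"
proof (cases t)
  case Star
  then show ?thesis using assms by (simp add: rho_diff rho_fmul rho_fscal)
next
  case (Tr al u k be)
  show ?thesis
  proof (cases al)
    case Nil
    then show ?thesis using assms Tr
      by (simp add: rho_diff rho_fmul rho_fscal single_eq_iff m_assoc ae_mult phi_mult c_mult inv_mult_group)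
  next
    case (Cons a al')
    show ?thesis
    proof (cases "e = ae g a")
      case True
      then show ?thesis using assms Tr Cons
        by (simp add: rho_diff rho_fmul rho_fscal single_eq_iff)
    next
      case False
      then have "ae (inv g) e \<noteq> a" using assms by auto
      then show ?thesis using assms Tr Cons False
        by (simp add: rho_diff rho_fmul rho_fscal single_eq_iff)
    qed
  qed
qed

end


context ep begin

definition Eout :: "'v \<Rightarrow> 'e set" where "Eout u = {e \<in> E. s e = u}"

definition tailT :: "'e list \<Rightarrow> 'g \<Rightarrow> 'e list \<Rightarrow> 'e \<Rightarrow> ('v, 'e, 'g) tr" where
  "tailT al g be e = Tr (al @ [e]) (r e) (\<phi> g (ae (inv g) e)) (ae (inv g) e # be)"

fun Qv :: "('v, 'e, 'g) tr \<Rightarrow> (('v, 'e, 'g) tr \<Rightarrow>\<^sub>0 'l)" where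
  "Qv Star = 0"
| "Qv (Tr al u g be) = Poly_Mapping.single (Tr al u g be) 1 -
     (\<Sum>e\<in>Eout u. Poly_Mapping.single (tailT al g be e) (c g (ae (inv g) e)))"

fun good :: "('v, 'e, 'g) tr \<Rightarrow> bool" where
  "good Star = False"
| "good (Tr al u g be) = (valid (Tr al u g be) \<and> regular_vertex E s u)"

inductive_set Wset :: "(('v, 'e, 'g) tr \<Rightarrow>\<^sub>0 'l) set" where
  W0: "0 \<in> Wset"
| WQ: "good t \<Longrightarrow> cmul a (Qv t) \<in> Wset"
| Wadd: "x \<in> Wset \<Longrightarrow> y \<in> Wset \<Longrightarrow> x + y \<in> Wset"

lemma W_cmul: "x \<in> Wset \<Longrightarrow> cmul a x \<in> Wset"
  by (induction rule: Wset.induct) (auto simp: cmul_add intro: Wset.intros)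

lemma W_Q: "good t \<Longrightarrow> Qv t \<in> Wset"
  using WQ[of t 1] by simp

lemma W_lin:
  assumes "lin f" "\<And>t. good t \<Longrightarrow> f (Qv t) \<in> Wset" "x \<in> Wset"
  shows "f x \<in> Wset"
  using assms(3)
proof (induction rule: Wset.induct)
  case W0 then show ?case by (simp add: lin_zero[OF assms(1)] Wset.W0)
next
  case (WQ t a) then show ?case by (simp add: lin_cmul[OF assms(1)] W_cmul assms(2))
next
  case (Wadd x y) then show ?case by (simp add: lin_add[OF assms(1)] Wset.Wadd)
qed

lemma finite_Eout: "regular_vertex E s u \<Longrightarrow> finite (Eout u)"
  by (simp add: regular_vertex_def Eout_def)

lemma src_snoc_tail: "e \<in> Eout u \<Longrightarrow> src (al @ [e]) (r e) = src al u"
  by (cases al) (auto simp: Eout_def)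

lemma act_sum: "act x (sum f S) = (\<Sum>i\<in>S. act x (f i))"
  by (rule lin_sum[OF lin_act])
lemma act_diff: "act x (a - b) = act x a - act x b"
  by (rule lin_diff[OF lin_act])

lemma C2_GE:
  assumes gt: "good (Tr al u g be)"
  shows "act (GE e) (Qv (Tr al u g be)) =
    (if e \<in> E \<and> r e = src al u then Qv (Tr (e # al) u g be) else 0)"
proof -
  have "act (GE e) (Poly_Mapping.single (tailT al g be e') (c g (ae (inv g) e'))) =
     (if e \<in> E \<and> r e = src al u then Poly_Mapping.single (tailT (e # al) g be e') (c g (ae (inv g) e')) else 0)"
    if "e' \<in> Eout u" for e'
    using that by (simp add: tailT_def src_snoc_tail)
  then show ?thesis
    by (auto simp: act_diff act_sum intro: sum.neutral)
qed


lemma C2_GS_Nil: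
  assumes gt: "good (Tr [] u g be)"
  shows "act (GS e) (Qv (Tr [] u g be)) = 0"
proof -
  let ?X = "\<lambda>e'. Poly_Mapping.single (Tr [] (r e') (\<phi> g (ae (inv g) e')) (ae (inv g) e' # be)) (c g (ae (inv g) e'))"
  have "act (GS e) (Poly_Mapping.single (tailT [] g be e') (c g (ae (inv g) e'))) =
     (if e' = e then ?X e' else 0)"
    if "e' \<in> Eout u" for e'
    using that by (auto simp: tailT_def Eout_def)
  then have "(\<Sum>e'\<in>Eout u. act (GS e) (Poly_Mapping.single (tailT [] g be e') (c g (ae (inv g) e')))) =
      (\<Sum>e'\<in>Eout u. (if e' = e then ?X e' else 0))"
    by (rule sum.cong[OF refl])
  also have "\<dots> = (if e \<in> Eout u then ?X e else 0)"
    using finite_Eout[of u] gt by (simp add: sum.delta)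
  finally show ?thesis
    by (auto simp: act_diff act_sum Eout_def)
qed

lemma C2_GS_Cons:
  assumes gt: "good (Tr (a # al) u g be)"
  shows "act (GS e) (Qv (Tr (a # al) u g be)) = (if e \<in> E \<and> e = a then Qv (Tr al u g be) else 0)"
proof -
  have "act (GS e) (Poly_Mapping.single (tailT (a # al) g be e') (c g (ae (inv g) e'))) =
     (if e \<in> E \<and> e = a then Poly_Mapping.single (tailT al g be e') (c g (ae (inv g) e')) else 0)"
    if "e' \<in> Eout u" for e'
    using that gt by (auto simp: tailT_def)
  then show ?thesis
    by (auto simp: act_diff act_sum intro: sum.neutral)
qed


lemma ae_inv_mult: "m \<in> carrier G \<Longrightarrow> g \<in> carrier G \<Longrightarrow> a \<in> E \<Longrightarrow> ae (inv (m \<otimes> g)) (ae m a) = ae (inv g) a"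
  by (simp add: inv_mult_group ae_mult)

lemma C2_GV:
  assumes gt: "good (Tr al u g be)"
  shows "act (GV v h) (Qv (Tr al u g be)) =
    (if v \<in> V \<and> h \<in> carrier G \<and> v = av h (src al u)
     then cmul (gc h al) (Qv (Tr (gpath h al) (av h u) (gphi h al \<otimes> g) be)) else 0)"
proof (cases "v \<in> V \<and> h \<in> carrier G \<and> v = av h (src al u)")
  case False
  have "act (GV v h) (Poly_Mapping.single (tailT al g be e') (c g (ae (inv g) e'))) = 0"
    if "e' \<in> Eout u" for e'
    using that False by (auto simp: tailT_def src_snoc_tail)
  then show ?thesis using False
    by (auto simp: act_diff act_sum intro: sum.neutral)
next
  case True
  then have v: "v \<in> V" and h: "h \<in> carrier G" and vh: "v = av h (src al u)" by auto
  have al: "set al \<subseteq> E" and u: "u \<in> V" and g: "g \<in> carrier G" and po: "pathok al u"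
    and reg: "regular_vertex E s u" using gt by auto
  define m where "m = gphi h al"
  have m: "m \<in> carrier G" using al h by (simp add: m_def)
  have avm: "av m x = av h x" if "x \<in> V" for x using al h that by (simp add: m_def)
  have mg: "m \<otimes> g \<in> carrier G" using m g by simp
  let ?F = "\<lambda>e. Poly_Mapping.single (tailT (gpath h al) (m \<otimes> g) be e) (gc h al * c (m \<otimes> g) (ae (inv (m \<otimes> g)) e))"
  let ?H = "\<lambda>e'. act (GV v h) (Poly_Mapping.single (tailT al g be e') (c g (ae (inv g) e')))"
  have termeq: "?F (ae m a) = ?H a" if a: "a \<in> Eout u" for a
  proof -
    have aE: "a \<in> E" and sa: "s a = u" using a by (auto simp: Eout_def)
    have 1: "ae (inv (m \<otimes> g)) (ae m a) = ae (inv g) a" using m g aE by (rule ae_inv_mult)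
    have 2: "\<phi> (m \<otimes> g) (ae (inv g) a) = \<phi> m a \<otimes> \<phi> g (ae (inv g) a)"
      using m g aE by (simp add: phi_mult)
    have 3: "c (m \<otimes> g) (ae (inv g) a) = c m a * c g (ae (inv g) a)"
      using m g aE by (simp add: c_mult)
    have 4: "r (ae m a) = av h (r a)" using m aE avm by simp
    show ?thesis
      using a vh v h 1 2 3 4 by (simp add: tailT_def src_snoc_tail gpath_snoc gphi_snoc gc_snoc m_def algebra_simps)
  qed
  have bij1: "ae (inv m) (ae m a) = a" if "a \<in> Eout u" for a using that m by (simp add: Eout_def)
  have bij2: "ae m a \<in> Eout (av h u)" if "a \<in> Eout u" for a using that m avm u by (auto simp: Eout_def)
  have bij3: "ae m (ae (inv m) b) = b" if "b \<in> Eout (av h u)" for b using that m by (simp add: Eout_def)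
  have bij4: "ae (inv m) b \<in> Eout u" if "b \<in> Eout (av h u)" for b
  proof -
    have "b \<in> E" "s b = av m u" using that avm u by (auto simp: Eout_def)
    then show ?thesis using m u by (simp add: Eout_def)
  qed
  have sumeq: "(\<Sum>e'\<in>Eout u. ?H e') = (\<Sum>e\<in>Eout (av h u). ?F e)"
    by (rule sum.reindex_bij_witness[of _ "ae (inv m)" "ae m"])
       (simp_all add: bij1 bij2 bij3 bij4 termeq)
  have main: "act (GV v h) (Poly_Mapping.single (Tr al u g be) 1) =
      Poly_Mapping.single (Tr (gpath h al) (av h u) (m \<otimes> g) be) (gc h al)"
    using v h vh by (simp add: m_def)
  have "act (GV v h) (Qv (Tr al u g be)) =
      act (GV v h) (Poly_Mapping.single (Tr al u g be) 1) - (\<Sum>e'\<in>Eout u. ?H e')"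
    by (simp only: Qv.simps act_diff act_sum)
  also have "\<dots> = Poly_Mapping.single (Tr (gpath h al) (av h u) (m \<otimes> g) be) (gc h al) - (\<Sum>e\<in>Eout (av h u). ?F e)"
    by (simp only: main sumeq)
  also have "\<dots> = cmul (gc h al) (Qv (Tr (gpath h al) (av h u) (gphi h al \<otimes> g) be))"
    by (simp add: cmul_diff cmul_sum m_def)
  finally show ?thesis unfolding if_P[OF True] .
qed


lemma regular_av:
  assumes "regular_vertex E s u" "h \<in> carrier G" "u \<in> V"
  shows "regular_vertex E s (av h u)"
proof -
  have eq: "{e \<in> E. s e = av h u} = ae h ` {e \<in> E. s e = u}"
  proof
    show "{e \<in> E. s e = av h u} \<subseteq> ae h ` {e \<in> E. s e = u}"
    proof
      fix b assume b: "b \<in> {e \<in> E. s e = av h u}"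
      then have "ae (inv h) b \<in> {e \<in> E. s e = u}" using assms by auto
      moreover have "b = ae h (ae (inv h) b)" using b assms by simp
      ultimately show "b \<in> ae h ` {e \<in> E. s e = u}" by blast
    qed
    show "ae h ` {e \<in> E. s e = u} \<subseteq> {e \<in> E. s e = av h u}" using assms by auto
  qed
  show ?thesis using assms(1) unfolding regular_vertex_def eq by auto
qed

lemma W_sum: "(\<And>i. i \<in> S \<Longrightarrow> f i \<in> Wset) \<Longrightarrow> sum f S \<in> Wset"
  by (rule sum_closed[where W = Wset]) (auto intro: Wset.intros)

lemma act_Q_W: "good t \<Longrightarrow> act x (Qv t) \<in> Wset"
proof -
  assume gt: "good t"
  then obtain al u g be where t: "t = Tr al u g be" by (cases t) auto
  have al: "set al \<subseteq> E" and u: "u \<in> V" and g: "g \<in> carrier G" and po: "pathok al u"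
    and be: "set be \<subseteq> E" and reg: "regular_vertex E s u" using gt t by auto
  show ?thesis
  proof (cases x)
    case (GV v h)
    show ?thesis
    proof (cases "v \<in> V \<and> h \<in> carrier G \<and> v = av h (src al u)")
      case True
      then have "good (Tr (gpath h al) (av h u) (gphi h al \<otimes> g) be)"
        using al u g po be reg by (auto simp: gpath_E pathok_gpath regular_av)
      moreover from C2_GV[of al u g be v h] gt t
      have "act (GV v h) (Qv (Tr al u g be)) = cmul (gc h al) (Qv (Tr (gpath h al) (av h u) (gphi h al \<otimes> g) be))"
        unfolding if_P[OF True] by simp
      ultimately show ?thesis unfolding GV t by (simp only:) (rule WQ)
    next
      case False
      from C2_GV[of al u g be v h] gt t
      have "act (GV v h) (Qv (Tr al u g be)) = 0" unfolding if_not_P[OF False] by simp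
      then show ?thesis unfolding GV t by (simp only:) (rule W0)
    qed
  next
    case (GE e)
    show ?thesis
    proof (cases "e \<in> E \<and> r e = src al u")
      case True
      from C2_GE[of al u g be e] gt t
      have q: "act (GE e) (Qv (Tr al u g be)) = Qv (Tr (e # al) u g be)" unfolding if_P[OF True] by simp
      have "good (Tr (e # al) u g be)" using True gt t by simp
      then show ?thesis unfolding GE t q by (rule W_Q)
    next
      case False
      from C2_GE[of al u g be e] gt t
      have q: "act (GE e) (Qv (Tr al u g be)) = 0" unfolding if_not_P[OF False] by simp
      show ?thesis unfolding GE t q by (rule W0)
    qed
  next
    case (GS e)
    show ?thesis
    proof (cases al)
      case Nil
      from C2_GS_Nil[of u g be e] gt t Nil
      have q: "act (GS e) (Qv (Tr [] u g be)) = 0" by simp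
      show ?thesis unfolding GS t Nil q by (rule W0)
    next
      case (Cons a al')
      show ?thesis
      proof (cases "e \<in> E \<and> e = a")
        case True
        from C2_GS_Cons[of a al' u g be e] gt t Cons
        have q: "act (GS e) (Qv (Tr (a # al') u g be)) = Qv (Tr al' u g be)" unfolding if_P[OF True] by simp
        have "good (Tr al' u g be)" using True gt t Cons by simp
        then show ?thesis unfolding GS t Cons q by (rule W_Q)
      next
        case False
        from C2_GS_Cons[of a al' u g be e] gt t Cons
        have q: "act (GS e) (Qv (Tr (a # al') u g be)) = 0" unfolding if_not_P[OF False] by simp
        show ?thesis unfolding GS t Cons q by (rule W0)
      qed
    qed
  qed
qed

lemma W_act: "x \<in> Wset \<Longrightarrow> act y x \<in> Wset"
  by (rule W_lin[OF lin_act act_Q_W])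

lemma W_actw: "x \<in> Wset \<Longrightarrow> actw w x \<in> Wset"
  by (induction w) (auto simp: W_act)

lemma W_rho: "x \<in> Wset \<Longrightarrow> rho p x \<in> Wset"
  unfolding rho_def ext_def by (intro W_sum W_cmul W_actw)

lemma C1:
  assumes v: "v \<in> V" and reg: "regular_vertex E s v" and vt: "valid t"
  shows "rho (fgen (GV v \<one>) - (\<Sum>e\<in>{e\<in>E. s e = v}. fmul (fgen (GE e)) (fgen (GS e))))
           (Poly_Mapping.single t 1) \<in> Wset"
proof -
  have eq: "rho (fgen (GV v \<one>) - (\<Sum>e\<in>{e\<in>E. s e = v}. fmul (fgen (GE e)) (fgen (GS e))))
           (Poly_Mapping.single t 1) = act (GV v \<one>) (Poly_Mapping.single t 1) -
      (\<Sum>e\<in>Eout v. act (GE e) (act (GS e) (Poly_Mapping.single t 1)))"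
    by (simp only: rho_diff rho_sum rho_fmul rho_fgen Eout_def)
  show ?thesis
  proof (cases t)
    case Star
    have tm: "act (GE e) (act (GS e) (Poly_Mapping.single t 1)) = Poly_Mapping.single (tailT [] \<one> [] e) (c \<one> (ae (inv \<one>) e))"
      if "e \<in> Eout v" for e using that Star by (simp add: Eout_def tailT_def)
    have q: "act (GV v \<one>) (Poly_Mapping.single t 1) -
      (\<Sum>e\<in>Eout v. act (GE e) (act (GS e) (Poly_Mapping.single t 1))) = Qv (Tr [] v \<one> [])"
    proof -
      have s1: "(\<Sum>e\<in>Eout v. act (GE e) (act (GS e) (Poly_Mapping.single t 1))) =
        (\<Sum>e\<in>Eout v. Poly_Mapping.single (tailT [] \<one> [] e) (c \<one> (ae (inv \<one>) e)))"
        by (rule sum.cong[OF refl tm])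
      have s2: "act (GV v \<one>) (Poly_Mapping.single t 1) = Poly_Mapping.single (Tr [] v \<one> []) 1"
        using Star v by simp
      show ?thesis unfolding s1 s2 Qv.simps by (rule refl)
    qed
    have "good (Tr [] v \<one> [])" using v reg by simp
    then show ?thesis unfolding eq q by (rule W_Q)
  next
    case (Tr al u k be)
    show ?thesis
    proof (cases al)
      case Nil
      show ?thesis
      proof (cases "u = v")
        case True
        have tm: "act (GE e) (act (GS e) (Poly_Mapping.single t 1)) = Poly_Mapping.single (tailT [] k be e) (c k (ae (inv k) e))"
          if "e \<in> Eout v" for e using that Tr Nil True by (simp add: Eout_def tailT_def)
        have q: "act (GV v \<one>) (Poly_Mapping.single t 1) -
          (\<Sum>e\<in>Eout v. act (GE e) (act (GS e) (Poly_Mapping.single t 1))) = Qv (Tr [] u k be)"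
        proof -
          have s1: "(\<Sum>e\<in>Eout v. act (GE e) (act (GS e) (Poly_Mapping.single t 1))) =
            (\<Sum>e\<in>Eout u. Poly_Mapping.single (tailT [] k be e) (c k (ae (inv k) e)))"
            unfolding True by (rule sum.cong[OF refl tm])
          have s2: "act (GV v \<one>) (Poly_Mapping.single t 1) = Poly_Mapping.single (Tr [] u k be) 1"
            using Tr Nil True v vt by simp
          show ?thesis unfolding s1 s2 Qv.simps by (rule refl)
        qed
        have "good (Tr [] u k be)" using vt reg Tr True by simp
        then show ?thesis unfolding eq q by (rule W_Q)
      next
        case False
        have "act (GV v \<one>) (Poly_Mapping.single t 1) -
          (\<Sum>e\<in>Eout v. act (GE e) (act (GS e) (Poly_Mapping.single t 1))) = 0"
          using Tr Nil False v vt by (auto simp: Eout_def intro!: sum.neutral)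
        then show ?thesis unfolding eq by (simp only:) (rule W0)
      qed
    next
      case (Cons a al')
      have aE: "a \<in> E" and ra: "r a = src al' u" using vt Tr Cons by auto
      have "(\<Sum>e\<in>Eout v. act (GE e) (act (GS e) (Poly_Mapping.single t 1))) =
         (\<Sum>e\<in>Eout v. if e = a then Poly_Mapping.single t 1 else 0)"
        using Tr Cons aE ra by (intro sum.cong) (auto simp: Eout_def)
      also have "\<dots> = (if a \<in> Eout v then Poly_Mapping.single t 1 else 0)"
        using finite_Eout[OF reg] by (simp add: sum.delta')
      finally have "act (GV v \<one>) (Poly_Mapping.single t 1) -
          (\<Sum>e\<in>Eout v. act (GE e) (act (GS e) (Poly_Mapping.single t 1))) = 0"
        using Tr Cons vt aE by (auto simp: Eout_def)
      then show ?thesis unfolding eq by (simp only:) (rule W0)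
    qed
  qed
qed


lemma W_closed_reach:
  assumes "\<And>t. valid t \<Longrightarrow> rho a (Poly_Mapping.single t 1) \<in> Wset" "reach n"
  shows "rho a n \<in> Wset"
  by (rule lin_basis_closed[OF lin_rho]) (use assms in \<open>auto simp: reach_def intro: Wset.intros W_cmul\<close>)

lemma zero_reach:
  assumes "\<And>t. valid t \<Longrightarrow> rho a (Poly_Mapping.single t 1) = 0" "reach n"
  shows "rho a n \<in> Wset"
  using lin_zero_on_reach[OF lin_rho assms] by (simp add: W0)

lemma base_W:
  assumes a: "a \<in> ep_rels G V E r s av ae \<phi> c" and n: "reach n"
  shows "rho a n \<in> Wset"
  using a unfolding ep_rels_def
proof (elim UnE CollectE exE conjE)
  fix e assume A: "a = fgen (GE e) - fmul (fmul (fgen (GV (s e) \<one>)) (fgen (GE e))) (fgen (GV (r e) \<one>))"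
    and H: "e \<in> E"
  show ?thesis unfolding A by (rule zero_reach[OF R1[OF H] n])
next
  fix e assume A: "a = fgen (GS e) - fmul (fmul (fgen (GV (r e) \<one>)) (fgen (GS e))) (fgen (GV (s e) \<one>))"
    and H: "e \<in> E"
  show ?thesis unfolding A by (rule zero_reach[OF R2[OF H] n])
next
  fix e f assume A: "a = fmul (fgen (GS e)) (fgen (GE f)) - (if e = f then fgen (GV (r e) \<one>) else 0)"
    and H: "e \<in> E" "f \<in> E"
  show ?thesis unfolding A by (rule zero_reach[OF R3[OF H] n])
next
  fix v g w h assume A: "a = fmul (fgen (GV v g)) (fgen (GV w h)) - (if v = av g w then fgen (GV v (g \<otimes> h)) else 0)"
    and H: "v \<in> V" "w \<in> V" "g \<in> carrier G" "h \<in> carrier G"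
  show ?thesis unfolding A by (rule zero_reach[OF R4[OF H] n])
next
  fix v g e assume A: "a = fmul (fgen (GV v g)) (fgen (GE e)) -
        (if v = av g (s e)
         then fscal (c g e) (fmul (fgen (GE (ae g e))) (fgen (GV (r (ae g e)) (\<phi> g e))))
         else 0)" and H: "v \<in> V" "g \<in> carrier G" "e \<in> E"
  show ?thesis unfolding A by (rule zero_reach[OF R5[OF H] n])
next
  fix e v g assume A: "a = fmul (fgen (GS e)) (fgen (GV v g)) -
        (if v = s e
         then fscal (c g (ae (inv g) e))
                (fmul (fgen (GV (r e) (\<phi> g (ae (inv g) e)))) (fgen (GS (ae (inv g) e))))
         else 0)" and H: "e \<in> E" "v \<in> V" "g \<in> carrier G"
  show ?thesis unfolding A by (rule zero_reach[OF R6[OF H] n])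
next
  fix v assume A: "a = fgen (GV v \<one>) - (\<Sum>e\<in>{e\<in>E. s e = v}. fmul (fgen (GE e)) (fgen (GS e)))"
    and H: "v \<in> V" "regular_vertex E s v"
  show ?thesis unfolding A by (rule W_closed_reach[OF C1[OF H] n])
qed

lemma ideal_W:
  assumes "a \<in> fideal (ep_rels G V E r s av ae \<phi> c)"
  shows "reach n \<Longrightarrow> rho a n \<in> Wset"
  using assms
proof (induction arbitrary: n rule: fideal.induct)
  case zero then show ?case by (simp add: W0)
next
  case (base a) then show ?case by (rule base_W)
next
  case (add a b) then show ?case by (simp add: rho_add Wadd)
next
  case (mult a x y)
  have "reach (rho y n)" using mult.prems by (rule reach_rho)
  then have "rho a (rho y n) \<in> Wset" by (rule mult.IH)
  then show ?case by (simp add: rho_fmul W_rho)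
qed

end


definition sandw :: "'x list \<Rightarrow> ('x, 'l::comm_ring_1) falg \<Rightarrow> 'x list \<Rightarrow> ('x, 'l) falg" where
  "sandw A p B = fmul (fmul (Poly_Mapping.single A 1) p) (Poly_Mapping.single B 1)"

lemma sandw_single [simp]: "sandw A (Poly_Mapping.single w k) B = Poly_Mapping.single (A @ w @ B) k"
  by (simp add: sandw_def)

lemma lin_sandw: "lin (\<lambda>p. sandw A p B)"
  unfolding sandw_def by (rule lin_comp[OF lin_fmul_left lin_fmul_right])

lemma sandw_diff: "sandw A (p - q) B = sandw A p B - sandw A q B"
  by (rule lin_diff[OF lin_sandw])
lemma sandw_sum: "sandw A (sum f S) B = (\<Sum>i\<in>S. sandw A (f i) B)"
  by (rule lin_sum[OF lin_sandw])
lemma sandw_zero [simp]: "sandw A 0 B = 0"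
  by (rule lin_zero[OF lin_sandw])

lemma fgen2: "fmul (fgen x) (fgen y) = Poly_Mapping.single [x, y] 1"
  by (simp add: fgen_def)

lemma sandw_ideal: "p \<in> R \<Longrightarrow> sandw A p B \<in> fideal R"
  unfolding sandw_def by (rule fideal_sandwich)

context ep begin

abbreviation LI :: "((('v, 'e) lgen), 'l) falg set" where
  "LI \<equiv> fideal (leavitt_rels V E r s)"

lemma VV: "v \<in> V \<Longrightarrow> w \<in> V \<Longrightarrow>
  Poly_Mapping.single (A @ LV v # LV w # B) 1 - (if v = w then Poly_Mapping.single (A @ LV v # B) (1::'l) else 0) \<in> LI"
proof -
  assume vw: "v \<in> V" "w \<in> V"
  have "fmul (fgen (LV v)) (fgen (LV w)) - (if v = w then fgen (LV v) else 0) \<in> leavitt_rels V E r s"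
    using vw unfolding leavitt_rels_def by blast
  from sandw_ideal[OF this, of A B] show ?thesis
    by (cases "v = w") (simp_all add: sandw_diff fgen2 fgen_def)
qed

lemma VE: "e \<in> E \<Longrightarrow>
  Poly_Mapping.single (A @ LV (s e) # LE e # B) 1 - Poly_Mapping.single (A @ LE e # B) (1::'l) \<in> LI"
proof -
  assume e: "e \<in> E"
  have "fmul (fgen (LV (s e))) (fgen (LE e)) - fgen (LE e) \<in> leavitt_rels V E r s"
    using e unfolding leavitt_rels_def by blast
  from sandw_ideal[OF this, of A B] show ?thesis by (simp add: sandw_diff fgen2 fgen_def)
qed

lemma EV: "e \<in> E \<Longrightarrow>
  Poly_Mapping.single (A @ LE e # LV (r e) # B) 1 - Poly_Mapping.single (A @ LE e # B) (1::'l) \<in> LI"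
proof -
  assume e: "e \<in> E"
  have "fmul (fgen (LE e)) (fgen (LV (r e))) - fgen (LE e) \<in> leavitt_rels V E r s"
    using e unfolding leavitt_rels_def by blast
  from sandw_ideal[OF this, of A B] show ?thesis by (simp add: sandw_diff fgen2 fgen_def)
qed

lemma VS: "e \<in> E \<Longrightarrow>
  Poly_Mapping.single (A @ LV (r e) # LS e # B) 1 - Poly_Mapping.single (A @ LS e # B) (1::'l) \<in> LI"
proof -
  assume e: "e \<in> E"
  have "fmul (fgen (LV (r e))) (fgen (LS e)) - fgen (LS e) \<in> leavitt_rels V E r s"
    using e unfolding leavitt_rels_def by blast
  from sandw_ideal[OF this, of A B] show ?thesis by (simp add: sandw_diff fgen2 fgen_def)
qed

lemma SV: "e \<in> E \<Longrightarrow>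
  Poly_Mapping.single (A @ LS e # LV (s e) # B) 1 - Poly_Mapping.single (A @ LS e # B) (1::'l) \<in> LI"
proof -
  assume e: "e \<in> E"
  have "fmul (fgen (LS e)) (fgen (LV (s e))) - fgen (LS e) \<in> leavitt_rels V E r s"
    using e unfolding leavitt_rels_def by blast
  from sandw_ideal[OF this, of A B] show ?thesis by (simp add: sandw_diff fgen2 fgen_def)
qed

lemma SE: "e \<in> E \<Longrightarrow> f \<in> E \<Longrightarrow>
  Poly_Mapping.single (A @ LS e # LE f # B) 1 - (if e = f then Poly_Mapping.single (A @ LV (r e) # B) (1::'l) else 0) \<in> LI"
proof -
  assume ef: "e \<in> E" "f \<in> E"
  have "fmul (fgen (LS e)) (fgen (LE f)) - (if e = f then fgen (LV (r e)) else 0) \<in> leavitt_rels V E r s"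
    using ef unfolding leavitt_rels_def by blast
  from sandw_ideal[OF this, of A B] show ?thesis
    by (cases "e = f") (simp_all add: sandw_diff fgen2 fgen_def)
qed

lemma CK: "v \<in> V \<Longrightarrow> regular_vertex E s v \<Longrightarrow>
  Poly_Mapping.single (A @ LV v # B) 1 - (\<Sum>e\<in>Eout v. Poly_Mapping.single (A @ LE e # LS e # B) (1::'l)) \<in> LI"
proof -
  assume v: "v \<in> V" "regular_vertex E s v"
  have "fgen (LV v) - (\<Sum>e\<in>{e\<in>E. s e = v}. fmul (fgen (LE e)) (fgen (LS e))) \<in> leavitt_rels V E r s"
    using v unfolding leavitt_rels_def by blast
  from sandw_ideal[OF this, of A B] show ?thesis
    by (simp add: sandw_diff sandw_sum fgen2 fgen_def Eout_def)
qed


lemma LI_0 [simp]: "0 \<in> LI" by (rule fideal.zero)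

lemma LI_neg [simp]: "- a \<in> LI \<longleftrightarrow> a \<in> LI"
  using fideal_uminus[of a] fideal_uminus[of "- a"] by auto

lemma LI_trans: "a - b \<in> LI \<Longrightarrow> b - d \<in> LI \<Longrightarrow> a - d \<in> LI"
  using fideal.add[of "a - b" _ "b - d"] by simp
lemma LI_sym: "a - b \<in> LI \<Longrightarrow> b - a \<in> LI"
  using fideal_uminus[of "a - b"] by simp
lemma LI_zero: "a \<in> LI \<Longrightarrow> a - 0 \<in> LI" by simp
lemma LI_of_diff: "a - b \<in> LI \<Longrightarrow> b \<in> LI \<Longrightarrow> a \<in> LI"
  using fideal.add[of "a - b" _ b] by simp

fun wordT :: "('v, 'e, 'g) tr \<Rightarrow> ('v, 'e) lgen list" where
  "wordT Star = []"
| "wordT (Tr al u g be) = map LE al @ LV u # map LS be"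

fun grp1 :: "('v, 'e, 'g) tr \<Rightarrow> bool" where
  "grp1 Star = True"
| "grp1 (Tr al u g be) = (g = \<one>)"

fun psib :: "('v, 'e, 'g) tr \<Rightarrow> ((('v, 'e) lgen), 'l) falg" where
  "psib Star = Poly_Mapping.single [] 1"
| "psib (Tr al u g be) = (if g = \<one> then Poly_Mapping.single (wordT (Tr al u g be)) 1 else 0)"

definition psi :: "(('v, 'e, 'g) tr \<Rightarrow>\<^sub>0 'l) \<Rightarrow> ((('v, 'e) lgen), 'l) falg" where
  "psi n = ext psib n"

lemma lin_psi: "lin psi"
  unfolding psi_def[abs_def] by (rule lin_ext)

lemma psi_zero [simp]: "psi 0 = 0"
  by (rule lin_zero[OF lin_psi])

lemma psi_single [simp]: "psi (Poly_Mapping.single t k) = cmul k (psib t)"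
  by (simp add: psi_def)

lemma kill:
  assumes vt: "valid (Tr al u g be)" and v: "v \<in> V" and ne: "v \<noteq> src al u"
  shows "Poly_Mapping.single (A @ LV v # wordT (Tr al u g be)) (1::'l) \<in> LI"
proof (cases al)
  case Nil
  then show ?thesis using VV[of v u A "map LS be"] vt v ne by simp
next
  case (Cons a al')
  have aE: "a \<in> E" using vt Cons by simp
  have 1: "Poly_Mapping.single (A @ LV v # LV (s a) # LE a # map LE al' @ LV u # map LS be) (1::'l) -
     Poly_Mapping.single (A @ LV v # LE a # map LE al' @ LV u # map LS be) 1 \<in> LI"
    using VE[OF aE, of "A @ [LV v]" "map LE al' @ LV u # map LS be"] by simp
  have 2: "Poly_Mapping.single (A @ LV v # LV (s a) # LE a # map LE al' @ LV u # map LS be) (1::'l) \<in> LI"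
    using VV[of v "s a" A "LE a # map LE al' @ LV u # map LS be"] v aE ne Cons by simp
  show ?thesis using LI_of_diff[OF LI_sym[OF 1] 2] Cons by simp
qed

lemma absorb:
  assumes vt: "valid (Tr al u g be)"
  shows "Poly_Mapping.single (A @ LV (src al u) # wordT (Tr al u g be)) (1::'l) -
     Poly_Mapping.single (A @ wordT (Tr al u g be)) 1 \<in> LI"
proof (cases al)
  case Nil
  then show ?thesis using VV[of u u A "map LS be"] vt by simp
next
  case (Cons a al')
  have aE: "a \<in> E" using vt Cons by simp
  show ?thesis using VE[OF aE, of A "map LE al' @ LV u # map LS be"] Cons by simp
qed

lemma killE:
  assumes vt: "valid (Tr al u g be)" and e: "e \<in> E" and ne: "r e \<noteq> src al u"
  shows "Poly_Mapping.single (A @ LE e # wordT (Tr al u g be)) (1::'l) \<in> LI"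
proof -
  have 1: "Poly_Mapping.single (A @ LE e # LV (r e) # wordT (Tr al u g be)) (1::'l) -
      Poly_Mapping.single (A @ LE e # wordT (Tr al u g be)) 1 \<in> LI"
    using EV[OF e, of A "wordT (Tr al u g be)"] by simp
  have 2: "Poly_Mapping.single (A @ LE e # LV (r e) # wordT (Tr al u g be)) (1::'l) \<in> LI"
    using kill[OF vt _ ne, of "A @ [LE e]"] e by simp
  show ?thesis by (rule LI_of_diff[OF LI_sym[OF 1] 2])
qed


lemma A_basis:
  assumes vt: "valid t" and g1: "grp1 t" and x: "x \<in> lgens V E"
  shows "psi (act (canon G x) (Poly_Mapping.single t 1)) - Poly_Mapping.single (x # wordT t) (1::'l) \<in> LI"
proof -
  consider (V) v where "x = LV v" "v \<in> V" | (E) e where "x = LE e" "e \<in> E" | (S) e where "x = LS e" "e \<in> E"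
    using x unfolding lgens_def by blast
  then show ?thesis
  proof cases
    case V
    show ?thesis
    proof (cases t)
      case Star then show ?thesis using V by simp
    next
      case (Tr al u g be)
      have g: "g = \<one>" and al: "set al \<subseteq> E" and u: "u \<in> V" using g1 vt Tr by auto
      show ?thesis
      proof (cases "v = src al u")
        case True
        have "act (canon G x) (Poly_Mapping.single t 1) = Poly_Mapping.single t 1"
          using V True Tr g al u by simp
        then show ?thesis using LI_sym[OF absorb[of al u g be "[]"]] vt Tr g V True by simp
      next
        case False
        have "act (canon G x) (Poly_Mapping.single t 1) = 0"
          using V False Tr g al u by simp
        then show ?thesis using kill[of al u g be v "[]"] vt Tr V False by simp
      qed
    qed
  next
    case E
    show ?thesis
    proof (cases t)
      case Star then show ?thesis using E EV[of e "[]" "[]"] by simp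
    next
      case (Tr al u g be)
      have g: "g = \<one>" using g1 Tr by auto
      show ?thesis
      proof (cases "r e = src al u")
        case True
        then show ?thesis using E Tr g by simp
      next
        case False
        then show ?thesis using killE[of al u g be e "[]"] vt Tr E g by simp
      qed
    qed
  next
    case S
    show ?thesis
    proof (cases t)
      case Star then show ?thesis using S VS[of e "[]" "[]"] by simp
    next
      case (Tr al u g be)
      have g: "g = \<one>" and u: "u \<in> V" and be: "set be \<subseteq> E" using g1 vt Tr by auto
      show ?thesis
      proof (cases al)
        case Nil
        show ?thesis
        proof (cases "u = s e")
          case True
          have "act (canon G x) (Poly_Mapping.single t 1) = Poly_Mapping.single (Tr [] (r e) \<one> (e # be)) 1"
            using S True Tr Nil g by simp
          moreover have "Poly_Mapping.single (LV (r e) # LS e # map LS be) (1::'l) -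
              Poly_Mapping.single (LS e # LV (s e) # map LS be) 1 \<in> LI"
            using LI_trans[OF VS[OF S(2), of "[]" "map LS be"] LI_sym[OF SV[OF S(2), of "[]" "map LS be"]]]
            by simp
          ultimately show ?thesis using S True Tr Nil g by simp
        next
          case False
          have "act (canon G x) (Poly_Mapping.single t 1) = 0"
            using S False Tr Nil g by simp
          moreover have "Poly_Mapping.single (LS e # LV u # map LS be) (1::'l) \<in> LI"
          proof -
            have 1: "Poly_Mapping.single (LS e # LV (s e) # LV u # map LS be) (1::'l) -
               Poly_Mapping.single (LS e # LV u # map LS be) 1 \<in> LI"
              using SV[OF S(2), of "[]" "LV u # map LS be"] by simp
            have 2: "Poly_Mapping.single (LS e # LV (s e) # LV u # map LS be) (1::'l) \<in> LI"
              using VV[of "s e" u "[LS e]" "map LS be"] S u False by simp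
            show ?thesis by (rule LI_of_diff[OF LI_sym[OF 1] 2])
          qed
          ultimately show ?thesis using S Tr Nil by simp
        qed
      next
        case (Cons a al')
        have aE: "a \<in> E" and ra: "r a = src al' u" and vt': "valid (Tr al' u g be)" using vt Tr Cons by auto
        show ?thesis
        proof (cases "e = a")
          case True
          have "act (canon G x) (Poly_Mapping.single t 1) = Poly_Mapping.single (Tr al' u g be) 1"
            using S True Tr Cons by simp
          moreover have "Poly_Mapping.single (wordT (Tr al' u g be)) (1::'l) -
              Poly_Mapping.single (LS a # LE a # wordT (Tr al' u g be)) 1 \<in> LI"
          proof -
            have 1: "Poly_Mapping.single (LS a # LE a # wordT (Tr al' u g be)) (1::'l) -
               Poly_Mapping.single (LV (r a) # wordT (Tr al' u g be)) 1 \<in> LI"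
              using SE[OF aE aE, of "[]" "wordT (Tr al' u g be)"] by simp
            have 2: "Poly_Mapping.single (LV (r a) # wordT (Tr al' u g be)) (1::'l) -
               Poly_Mapping.single (wordT (Tr al' u g be)) 1 \<in> LI"
              using absorb[OF vt', of "[]"] ra by simp
            show ?thesis by (rule LI_sym[OF LI_trans[OF 1 2]])
          qed
          ultimately show ?thesis using S True Tr Cons g by simp
        next
          case False
          have "act (canon G x) (Poly_Mapping.single t 1) = 0"
            using S False Tr Cons by simp
          moreover have "Poly_Mapping.single (LS e # LE a # wordT (Tr al' u g be)) (1::'l) \<in> LI"
            using SE[OF S(2) aE, of "[]" "wordT (Tr al' u g be)"] False by simp
          ultimately show ?thesis using S Tr Cons by simp
        qed
      qed
    qed
  qed
qed


lemma stepT_grp1: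
  assumes vt: "valid t" and g1: "grp1 t" and x: "x \<in> lgens V E" and nz: "snd (stepT (canon G x) t) \<noteq> 0"
  shows "grp1 (fst (stepT (canon G x) t))"
proof -
  consider (V) v where "x = LV v" "v \<in> V" | (E) e where "x = LE e" "e \<in> E" | (S) e where "x = LS e" "e \<in> E"
    using x unfolding lgens_def by blast
  then show ?thesis
  proof cases
    case V then show ?thesis using vt g1 nz by (cases t) (auto split: if_splits)
  next
    case E then show ?thesis using vt g1 nz by (cases t) (auto split: if_splits)
  next
    case S
    show ?thesis
    proof (cases t)
      case (Tr al u g be)
      then show ?thesis using S vt g1 nz by (cases al) (auto split: if_splits)
    qed (use S nz in \<open>auto split: if_splits\<close>)
  qed
qed

definition reach1 :: "(('v, 'e, 'g) tr \<Rightarrow>\<^sub>0 'l) \<Rightarrow> bool" where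
  "reach1 n \<longleftrightarrow> (\<forall>t\<in>Poly_Mapping.keys n. valid t \<and> grp1 t)"

lemma reach1_act: "reach1 n \<Longrightarrow> x \<in> lgens V E \<Longrightarrow> reach1 (act (canon G x) n)"
  unfolding reach1_def
proof
  fix t' assume R: "\<forall>t\<in>Poly_Mapping.keys n. valid t \<and> grp1 t" and x: "x \<in> lgens V E"
    and t': "t' \<in> Poly_Mapping.keys (act (canon G x) n)"
  have "t' \<in> (\<Union>t\<in>Poly_Mapping.keys n. Poly_Mapping.keys (Poly_Mapping.single (fst (stepT (canon G x) t)) (snd (stepT (canon G x) t))))"
    using subsetD[OF keys_ext t'[unfolded act_def]] .
  then obtain t where t: "t \<in> Poly_Mapping.keys n"
    and t'2: "t' \<in> Poly_Mapping.keys (Poly_Mapping.single (fst (stepT (canon G x) t)) (snd (stepT (canon G x) t)))"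
    by blast
  then have a: "t' = fst (stepT (canon G x) t)" "snd (stepT (canon G x) t) \<noteq> 0"
    by (cases "snd (stepT (canon G x) t) = 0"; simp)+
  have "valid t \<and> grp1 t" using R t by (rule bspec)
  then show "valid t' \<and> grp1 t'" using a stepT_valid[of t "canon G x"] stepT_grp1[OF _ _ x, of t] by simp
qed

lemma A_step:
  assumes n: "reach1 n" and x: "x \<in> lgens V E"
  shows "psi (act (canon G x) n) - fmul (fgen x) (psi n) \<in> LI"
proof -
  have lf: "lin (\<lambda>n. psi (act (canon G x) n) - fmul (fgen x) (psi n))"
    by (intro lin_diff_fun lin_comp[OF lin_psi lin_act] lin_comp[OF lin_fmul_right lin_psi])
  show ?thesis
  proof (rule lin_basis_closed[OF lf])
    show "0 \<in> LI" by simp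
    show "a + b \<in> LI" if "a \<in> LI" "b \<in> LI" for a b using that by (rule fideal.add)
    show "cmul k a \<in> LI" if "a \<in> LI" for k a using that by (rule fideal_cmul)
    fix t assume t: "t \<in> Poly_Mapping.keys n"
    have vt: "valid t" and g1: "grp1 t" using n t unfolding reach1_def by auto
    have "psib t = Poly_Mapping.single (wordT t) 1" using g1 by (cases t) auto
    then have "fmul (fgen x) (psi (Poly_Mapping.single t 1)) = Poly_Mapping.single (x # wordT t) 1"
      by (simp add: fgen_mul_single)
    then show "psi (act (canon G x) (Poly_Mapping.single t 1)) - fmul (fgen x) (psi (Poly_Mapping.single t 1)) \<in> LI"
      using A_basis[OF vt g1 x] by simp
  qed
qed

lemma A_word:
  assumes "set w \<subseteq> lgens V E"
  shows "reach1 (actw (map (canon G) w) (Poly_Mapping.single Star 1)) \<and>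
    psi (actw (map (canon G) w) (Poly_Mapping.single Star 1)) - Poly_Mapping.single w 1 \<in> LI"
  using assms
proof (induction w)
  case Nil
  then show ?case by (simp add: reach1_def)
next
  case (Cons x w)
  let ?n = "actw (map (canon G) w) (Poly_Mapping.single Star 1)"
  have x: "x \<in> lgens V E" and IH: "reach1 ?n" "psi ?n - Poly_Mapping.single w 1 \<in> LI" using Cons by auto
  have 1: "psi (act (canon G x) ?n) - fmul (fgen x) (psi ?n) \<in> LI" by (rule A_step[OF IH(1) x])
  have "fmul (fmul (fgen x) (psi ?n - Poly_Mapping.single w 1)) (Poly_Mapping.single [] 1) \<in> LI"
    by (rule fideal.mult[OF IH(2)])
  then have 2: "fmul (fgen x) (psi ?n) - Poly_Mapping.single (x # w) 1 \<in> LI"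
    by (simp add: lin_diff[OF lin_fmul_right] fgen_mul_single)
  have "psi (act (canon G x) ?n) - Poly_Mapping.single (x # w) 1 \<in> LI" by (rule LI_trans[OF 1 2])
  then show ?case using reach1_act[OF IH(1) x] by simp
qed

end


context ep begin

lemma W_repr:
  assumes "x \<in> Wset"
  shows "\<exists>S lam. finite S \<and> (\<forall>t\<in>S. good t) \<and> x = (\<Sum>t\<in>S. cmul (lam t) (Qv t))"
  using assms
proof (induction rule: Wset.induct)
  case W0 then show ?case by (intro exI[of _ "{}"]) simp
next
  case (WQ t a) then show ?case by (intro exI[of _ "{t}"] exI[of _ "\<lambda>_. a"]) simp
next
  case (Wadd x y)
  obtain S1 l1 where 1: "finite S1" "\<forall>t\<in>S1. good t" "x = (\<Sum>t\<in>S1. cmul (l1 t) (Qv t))" using Wadd by blast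
  obtain S2 l2 where 2: "finite S2" "\<forall>t\<in>S2. good t" "y = (\<Sum>t\<in>S2. cmul (l2 t) (Qv t))" using Wadd by blast
  define l where "l t = (if t \<in> S1 then l1 t else 0) + (if t \<in> S2 then l2 t else 0)" for t
  have a: "(\<Sum>t\<in>S1 \<union> S2. cmul (if t \<in> S1 then l1 t else 0) (Qv t)) = (\<Sum>t\<in>S1. cmul (l1 t) (Qv t))"
  proof -
    have "(\<Sum>t\<in>S1 \<union> S2. cmul (if t \<in> S1 then l1 t else 0) (Qv t)) = (\<Sum>t\<in>S1. cmul (if t \<in> S1 then l1 t else 0) (Qv t))"
      by (rule sum.mono_neutral_right) (use 1 2 in auto)
    also have "\<dots> = (\<Sum>t\<in>S1. cmul (l1 t) (Qv t))" by (rule sum.cong) auto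
    finally show ?thesis .
  qed
  have b: "(\<Sum>t\<in>S1 \<union> S2. cmul (if t \<in> S2 then l2 t else 0) (Qv t)) = (\<Sum>t\<in>S2. cmul (l2 t) (Qv t))"
  proof -
    have "(\<Sum>t\<in>S1 \<union> S2. cmul (if t \<in> S2 then l2 t else 0) (Qv t)) = (\<Sum>t\<in>S2. cmul (if t \<in> S2 then l2 t else 0) (Qv t))"
      by (rule sum.mono_neutral_right) (use 1 2 in auto)
    also have "\<dots> = (\<Sum>t\<in>S2. cmul (l2 t) (Qv t))" by (rule sum.cong) auto
    finally show ?thesis .
  qed
  have "x + y = (\<Sum>t\<in>S1 \<union> S2. cmul (l t) (Qv t))"
    unfolding l_def cmul_add_left sum.distrib a b 1(3) 2(3) ..
  then show ?case using 1 2 by (intro exI[of _ "S1 \<union> S2"] exI[of _ l]) auto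
qed

fun lenT :: "('v, 'e, 'g) tr \<Rightarrow> nat" where
  "lenT Star = 0"
| "lenT (Tr al u g be) = length al"

lemma lookup_Qv:
  "Poly_Mapping.lookup (Qv (Tr al u g be)) t' =
    (if t' = Tr al u g be then 1 else 0) - (\<Sum>e\<in>Eout u. if t' = tailT al g be e then c g (ae (inv g) e) else 0)"
  by (simp add: lookup_minus lookup_sum lookup_single when_def eq_commute)

lemma Q_self: "Poly_Mapping.lookup (Qv (Tr al u g be)) (Tr al u g be) = 1"
proof -
  have "(\<Sum>e\<in>Eout u. if Tr al u g be = tailT al g be e then c g (ae (inv g) e) else 0) = 0"
    by (rule sum.neutral) (auto simp: tailT_def)
  then show ?thesis unfolding lookup_Qv by simp
qed

lemma Q_other:
  assumes "Poly_Mapping.lookup (Qv (Tr al u g be)) t' \<noteq> 0" "t' \<noteq> Tr al u g be"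
  shows "\<exists>e\<in>Eout u. t' = tailT al g be e"
proof (rule ccontr)
  assume "\<not> ?thesis"
  then have "(\<Sum>e\<in>Eout u. if t' = tailT al g be e then c g (ae (inv g) e) else 0) = 0"
    by (intro sum.neutral) auto
  then show False using assms unfolding lookup_Qv by simp
qed

fun grpT :: "('v, 'e, 'g) tr \<Rightarrow> 'g" where
  "grpT Star = \<one>"
| "grpT (Tr al u g be) = g"

lemma lead:
  assumes S: "finite S" "\<forall>t\<in>S. good t" and x: "x = (\<Sum>t\<in>S. cmul (lam t) (Qv t))"
    and k: "\<forall>t'\<in>Poly_Mapping.keys x. grp1 t'"
  shows "\<forall>t\<in>S. lam t \<noteq> 0 \<longrightarrow> grp1 t"
proof (rule ccontr)
  assume "\<not> ?thesis"
  then obtain t1 where t1: "t1 \<in> S" "lam t1 \<noteq> 0" "\<not> grp1 t1" by blast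
  let ?B = "{t\<in>S. lam t \<noteq> 0 \<and> \<not> grp1 t}"
  obtain t0 where t0: "t0 \<in> ?B" and mn: "\<And>t. t \<in> ?B \<Longrightarrow> lenT t0 \<le> lenT t"
    using ex_has_least_nat[of "\<lambda>t. t \<in> ?B" t1 lenT] t1 by auto
  have gt0: "good t0" using t0 S by auto
  then obtain al0 u0 g0 be0 where T0: "t0 = Tr al0 u0 g0 be0" by (cases t0) auto
  have g0: "g0 \<noteq> \<one>" using t0 T0 by simp
  have other: "lam t * Poly_Mapping.lookup (Qv t) t0 = 0" if t: "t \<in> S" "t \<noteq> t0" for t
  proof (rule ccontr)
    assume nz: "lam t * Poly_Mapping.lookup (Qv t) t0 \<noteq> 0"
    then have lt: "lam t \<noteq> 0" and lq: "Poly_Mapping.lookup (Qv t) t0 \<noteq> 0" by auto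
    have gt: "good t" using t S by auto
    then obtain al u g be where T: "t = Tr al u g be" by (cases t) auto
    obtain e where e: "e \<in> Eout u" and te: "t0 = tailT al g be e"
      using Q_other[of al u g be t0] lq t T by auto
    have eE: "e \<in> E" using e by (simp add: Eout_def)
    have len: "lenT t0 = Suc (lenT t)" using te T by (simp add: tailT_def)
    show False
    proof (cases "g = \<one>")
      case True
      then have "g0 = \<one>" using te T0 eE by (simp add: tailT_def)
      then show False using g0 by simp
    next
      case False
      then have "t \<in> ?B" using t lt T by simp
      then show False using mn len by fastforce
    qed
  qed
  have "Poly_Mapping.lookup x t0 = (\<Sum>t\<in>S. lam t * Poly_Mapping.lookup (Qv t) t0)"
    by (simp add: x lookup_sum)
  also have "\<dots> = lam t0 * Poly_Mapping.lookup (Qv t0) t0 +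
      (\<Sum>t\<in>S - {t0}. lam t * Poly_Mapping.lookup (Qv t) t0)"
    by (rule sum.remove[OF S(1)]) (use t0 in blast)
  also have "(\<Sum>t\<in>S - {t0}. lam t * Poly_Mapping.lookup (Qv t) t0) = 0"
    using other by (intro sum.neutral) auto
  also have "Poly_Mapping.lookup (Qv t0) t0 = 1" unfolding T0 by (rule Q_self)
  finally have "Poly_Mapping.lookup x t0 = lam t0" by simp
  then have "t0 \<in> Poly_Mapping.keys x" using t0 by (simp add: in_keys_iff)
  then have "grp1 t0" using k by (rule bspec[rotated])
  then show False using t0 by simp
qed

lemma psi_Q:
  assumes gt: "good (Tr al u \<one> be)"
  shows "psi (Qv (Tr al u \<one> be)) \<in> LI"
proof -
  have u: "u \<in> V" and reg: "regular_vertex E s u" using gt by auto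
  let ?A = "map LE al" and ?B = "map LS be"
  have tl: "psi (Poly_Mapping.single (tailT al \<one> be e) (c \<one> (ae (inv \<one>) e))) =
      Poly_Mapping.single (?A @ LE e # LV (r e) # LS e # ?B) 1" if "e \<in> Eout u" for e
    using that by (simp add: Eout_def tailT_def)
  have eq: "psi (Qv (Tr al u \<one> be)) =
     Poly_Mapping.single (?A @ LV u # ?B) 1 - (\<Sum>e\<in>Eout u. Poly_Mapping.single (?A @ LE e # LV (r e) # LS e # ?B) 1)"
    by (simp only: Qv.simps lin_diff[OF lin_psi] lin_sum[OF lin_psi] sum.cong[OF refl tl])
      (simp)
  have 1: "Poly_Mapping.single (?A @ LV u # ?B) 1 - (\<Sum>e\<in>Eout u. Poly_Mapping.single (?A @ LE e # LS e # ?B) (1::'l)) \<in> LI"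
    by (rule CK[OF u reg])
  have 2: "(\<Sum>e\<in>Eout u. Poly_Mapping.single (?A @ LE e # LV (r e) # LS e # ?B) 1 -
        Poly_Mapping.single (?A @ LE e # LS e # ?B) (1::'l)) \<in> LI"
    by (rule fideal_sum) (rule EV, simp add: Eout_def)
  have "(Poly_Mapping.single (?A @ LV u # ?B) 1 - (\<Sum>e\<in>Eout u. Poly_Mapping.single (?A @ LE e # LS e # ?B) (1::'l))) -
     (\<Sum>e\<in>Eout u. Poly_Mapping.single (?A @ LE e # LV (r e) # LS e # ?B) 1 -
        Poly_Mapping.single (?A @ LE e # LS e # ?B) (1::'l)) \<in> LI"
    by (rule fideal_diff[OF 1 2])
  then show ?thesis unfolding eq by (simp add: sum_subtractf)
qed

lemma claimE:
  assumes x: "x \<in> Wset" and k: "\<forall>t'\<in>Poly_Mapping.keys x. grp1 t'"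
  shows "psi x \<in> LI"
proof -
  obtain S lam where S: "finite S" "\<forall>t\<in>S. good t" and xe: "x = (\<Sum>t\<in>S. cmul (lam t) (Qv t))"
    using W_repr[OF x] by blast
  have L: "\<forall>t\<in>S. lam t \<noteq> 0 \<longrightarrow> grp1 t" by (rule lead[OF S xe k])
  have "psi x = (\<Sum>t\<in>S. cmul (lam t) (psi (Qv t)))"
    by (simp add: xe lin_sum[OF lin_psi] lin_cmul[OF lin_psi])
  also have "\<dots> \<in> LI"
  proof (rule fideal_sum)
    fix t assume t: "t \<in> S"
    show "cmul (lam t) (psi (Qv t)) \<in> LI"
    proof (cases "lam t = 0")
      case True then show ?thesis by simp
    next
      case False
      then have g1: "grp1 t" using L t by blast
      have gt: "good t" using S t by blast
      then obtain al u be where T: "t = Tr al u \<one> be" using g1 by (cases t) auto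
      show ?thesis using psi_Q[of al u be] gt T by (simp add: fideal_cmul)
    qed
  qed
  finally show ?thesis .
qed

lemma main:
  assumes keys: "\<forall>u\<in>Poly_Mapping.keys p. set u \<subseteq> lgens V E"
    and J: "fmap (canon G) p \<in> fideal (ep_rels G V E r s av ae \<phi> c)"
  shows "p \<in> LI"
proof -
  let ?n = "rho (fmap (canon G) p) (Poly_Mapping.single Star 1)"
  let ?b = "\<lambda>u. actw (map (canon G) u) (Poly_Mapping.single Star 1)"
  have nW: "?n \<in> Wset" by (rule ideal_W[OF J]) (simp add: reach_def)
  have neq: "?n = ext ?b p"
    unfolding rho_def fmap_ext by (simp add: lin_ext_comp[OF lin_ext])
  have k: "\<forall>t'\<in>Poly_Mapping.keys ?n. grp1 t'"
  proof
    fix t' assume "t' \<in> Poly_Mapping.keys ?n"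
    then have "t' \<in> Poly_Mapping.keys (ext ?b p)" unfolding neq .
    then have "t' \<in> (\<Union>u\<in>Poly_Mapping.keys p. Poly_Mapping.keys (?b u))"
      by (rule subsetD[OF keys_ext])
    then obtain u where u: "u \<in> Poly_Mapping.keys p" and tu: "t' \<in> Poly_Mapping.keys (?b u)" by blast
    have "reach1 (?b u)" using A_word[of u] keys u by blast
    then show "grp1 t'" using tu unfolding reach1_def by blast
  qed
  have 1: "psi ?n \<in> LI" by (rule claimE[OF nW k])
  have "psi ?n - p = ext (\<lambda>u. psi (?b u) - Poly_Mapping.single u 1) p"
    unfolding neq lin_ext_comp[OF lin_psi] ext_basis_diff ext_id ..
  also have "\<dots> \<in> LI"
    unfolding ext_def
  proof (rule fideal_sum, rule fideal_cmul)
    fix u assume "u \<in> Poly_Mapping.keys p"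
    then show "psi (?b u) - Poly_Mapping.single u 1 \<in> LI" using A_word[of u] keys by blast
  qed
  finally have 2: "psi ?n - p \<in> LI" .
  show ?thesis using fideal_diff[OF 1 2] by simp
qed

end

theorem proposition3p9:
  fixes G :: "'g monoid" and V :: "'v set" and E :: "'e set" and r s :: "'e \<Rightarrow> 'v"
    and av :: "'g \<Rightarrow> 'v \<Rightarrow> 'v" and ae :: "'g \<Rightarrow> 'e \<Rightarrow> 'e" and \<phi> :: "'g \<Rightarrow> 'e \<Rightarrow> 'g"
    and c :: "'g \<Rightarrow> 'e \<Rightarrow> 'l::comm_ring_1"
    and p :: "(('v, 'e) lgen, 'l) falg"
  assumes "twisted_EP_tuple G V E r s av ae \<phi> c"
    and "\<forall>u\<in>Poly_Mapping.keys p. set u \<subseteq> lgens V E"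
    and "fmap (canon G) p \<in> fideal (ep_rels G V E r s av ae \<phi> c)"
  shows "p \<in> fideal (leavitt_rels V E r s)"
proof -
  have "group G" using assms(1) by (simp add: twisted_EP_tuple_def)
  then interpret ep G V E r s av ae \<phi> c
    by (rule ep.intro) (simp add: ep_axioms_def assms(1))
  show ?thesis by (rule main[OF assms(2,3)])
qed


end
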